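(* Let $p\ge2$, $X=\{0,1,\dots,p\}$, and for $v\in X^\infty$ let $\Gamma^p_v$ be the infinite Schreier graph of $\mathcal G_{S_p}$ containing $v$. Then every $\Gamma^p_v$ is either $2p$-ended, or $2$-ended, or $1$-ended. More precisely, writing $E_k=\{w\in X^\infty:\Gamma^p_w\text{ is }k\text{-ended}\}$: (1) $E_{2p}=Cof(0^\infty)\cup Cof(1^\infty)\cup\cdots\cup Cof(p^\infty)$, and it consists of one orbit; (2) $E_2=\Bigl(\bigcup_{i=1}^p\bigcup_{w\in\{0,i\}^\infty}Cof(w)\Bigr)\setminus E_{2p}$, and it consists of uncountably many orbits; (3) $E_1=X^\infty\setminus(E_{2p}\cup E_2)$, and it consists of uncountably many orbits. Moreover $\nu(E_1)=1$.
   Context: $\mathcal G_{S_p}$ is the group generated by the transformations $e_1,\dots,e_p$ of $X^\ast\cup X^\infty$ defined recursively by $e_i(0w)=i\,e_i(w)$, $e_i(iw)=0w$, $e_i(jw)=jw$ for $j\notin\{0,i\}$. $\Gamma^p_v$ has vertex set the $\mathcal G_{S_p}$-orbit of $v$, with an edge joining $u$ and $e_i(u)$ for each vertex $u$ and each $i$. A graph is $k$-ended if it has exactly $k$ ends (the supremum over finite subgraphs $F$ of the number of infinite connected components of the graph minus $F$ equals $k$). $Cof(\xi)$ is the set of infinite words differing from $\xi$ in only finitely many positions. $\nu$ is the uniform (Bernoulli product) measure on $X^\infty$. *)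

theory Defs
  imports "HOL-Probability.Probability"
begin

type_synonym word = "nat \<Rightarrow> nat"

definition Xinf :: "nat \<Rightarrow> word set" where
  "Xinf p = {w. \<forall>n. w n \<le> p}"

text \<open>The generator e_i, the unique transformation satisfying
  e_i(0w) = i e_i(w), e_i(iw) = 0w, e_i(jw) = jw for j not in {0,i}
  (on infinite words; in particular e_i(0^\<infinity>) = i^\<infinity>).\<close>
definition gen :: "nat \<Rightarrow> word \<Rightarrow> word" where
  "gen i w = (\<lambda>n. if (\<forall>m\<le>n. w m = 0) then i
                  else (let k = (LEAST m. w m \<noteq> 0) in
                        if n = k \<and> w k = i then 0 else w n))"

definition adj :: "nat \<Rightarrow> (word \<times> word) set" where
  "adj p = {(u, gen i u) | u i. i \<in> {1..p}} \<union> {(gen i u, u) | u i. i \<in> {1..p}}"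

definition orbit :: "nat \<Rightarrow> word \<Rightarrow> word set" where
  "orbit p v = {w. (v, w) \<in> (adj p)\<^sup>*}"

definition comp :: "nat \<Rightarrow> word set \<Rightarrow> word \<Rightarrow> word set" where
  "comp p S u = {w. (u, w) \<in> (Restr (adj p) S)\<^sup>*}"

definition ecard :: "'a set \<Rightarrow> enat" where
  "ecard A = (if finite A then enat (card A) else \<infinity>)"

definition num_ends :: "nat \<Rightarrow> word \<Rightarrow> enat" where
  "num_ends p v = (SUP F \<in> {F. finite F \<and> F \<subseteq> orbit p v}.
      ecard {comp p (orbit p v - F) u | u. u \<in> orbit p v - F \<and>
                                         infinite (comp p (orbit p v - F) u)})"

definition k_ended :: "nat \<Rightarrow> nat \<Rightarrow> word \<Rightarrow> bool" where
  "k_ended p k v \<longleftrightarrow> num_ends p v = enat k"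

definition E :: "nat \<Rightarrow> nat \<Rightarrow> word set" where
  "E p k = {w \<in> Xinf p. k_ended p k w}"

definition Cof :: "nat \<Rightarrow> word \<Rightarrow> word set" where
  "Cof p \<xi> = {\<eta> \<in> Xinf p. finite {n. \<eta> n \<noteq> \<xi> n}}"

definition nu :: "nat \<Rightarrow> word measure" where
  "nu p = PiM UNIV (\<lambda>_::nat. measure_pmf (pmf_of_set {0..p}))"

end

theory Submission
  imports Defs
begin

definition cns :: "nat \<Rightarrow> word \<Rightarrow> word" where
  "cns c w = (\<lambda>m. case m of 0 \<Rightarrow> c | Suc k \<Rightarrow> w k)"
definition sh :: "word \<Rightarrow> word" where "sh w = (\<lambda>m. w (Suc m))"
definition pre :: "nat \<Rightarrow> nat \<Rightarrow> word \<Rightarrow> word" where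
  "pre n a T = (\<lambda>m. if m < n then a else T (m - n))"
definition shn :: "nat \<Rightarrow> word \<Rightarrow> word" where "shn n w = (\<lambda>m. w (m + n))"

lemma cns_0[simp]: "cns c w 0 = c" by (simp add: cns_def)
lemma cns_Suc[simp]: "cns c w (Suc m) = w m" by (simp add: cns_def)
lemma sh_cns[simp]: "sh (cns c w) = w" by (simp add: cns_def sh_def)
lemma cns_sh: "cns (w 0) (sh w) = w" by (auto simp: cns_def sh_def split: nat.split)
lemma cns_eq_iff[simp]: "cns a u = cns b v \<longleftrightarrow> a = b \<and> u = v"
  by (metis cns_0 sh_cns)
lemma const_cns: "(\<lambda>_. j) = cns j (\<lambda>_. j)" by (auto simp: cns_def split: nat.split)

lemma gen_app: "gen i s m = (if (\<forall>m'\<le>m. s m' = 0) then i else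
   if m = (LEAST m. s m \<noteq> 0) \<and> s (LEAST m. s m \<noteq> 0) = i then 0 else s m)"
  unfolding gen_def Let_def by (rule refl)

lemma gen_explicit:
  assumes "s k \<noteq> 0" "\<forall>m<k. s m = 0"
  shows "gen i s = (\<lambda>m. if m < k then i else if m = k \<and> s k = i then 0 else s m)"
proof (rule ext)
  fix m
  have L: "(LEAST m. s m \<noteq> 0) = k"
  proof (rule Least_equality)
    show "s k \<noteq> 0" by (rule assms(1))
    show "\<And>y. s y \<noteq> 0 \<Longrightarrow> k \<le> y" using assms(2) by (metis not_le)
  qed
  show "gen i s m = (if m < k then i else if m = k \<and> s k = i then 0 else s m)"
  proof (cases "m < k")
    case True
    then have z: "\<forall>m'\<le>m. s m' = 0" using assms(2) by auto
    show ?thesis by (simp only: gen_app if_P[OF z] if_P[OF True])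
  next
    case False
    then have nz: "\<not> (\<forall>m'\<le>m. s m' = 0)" using assms(1) by (metis not_less)
    show ?thesis by (simp only: gen_app if_not_P[OF nz] if_not_P[OF False] L)
  qed
qed

lemma gen_zero: "gen i (\<lambda>_. 0) = (\<lambda>_. i)" by (simp add: gen_def)

lemma gen_cns: "gen i (cns c w) = (if c = 0 then cns i (gen i w) else if c = i then cns 0 w else cns c w)"
proof (cases "c = 0")
  case True
  show ?thesis
  proof (cases "\<exists>k. w k \<noteq> 0")
    case False
    then have "w = (\<lambda>_. 0)" by auto
    then show ?thesis using True by (simp add: gen_zero flip: const_cns)
  next
    case ex: True
    define k where "k = (LEAST m. w m \<noteq> 0)"
    have k1: "w k \<noteq> 0" using LeastI_ex[OF ex] unfolding k_def .
    have k2: "\<forall>m<k. w m = 0"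
    proof (intro allI impI)
      fix m assume "m < k"
      then show "w m = 0" using not_less_Least[of m "\<lambda>m. w m \<noteq> 0"] unfolding k_def by simp
    qed
    have e1: "gen i w = (\<lambda>m. if m < k then i else if m = k \<and> w k = i then 0 else w m)"
      by (rule gen_explicit[OF k1 k2])
    have e2: "gen i (cns c w) = (\<lambda>m. if m < Suc k then i else if m = Suc k \<and> cns c w (Suc k) = i then 0 else cns c w m)"
      by (rule gen_explicit) (use True k1 k2 in \<open>auto simp: less_Suc_eq_0_disj\<close>)
    show ?thesis using True unfolding e1 e2
      by (auto simp: cns_def split: nat.split)
  qed
next
  case False
  have e2: "gen i (cns c w) = (\<lambda>m. if m < 0 then i else if m = 0 \<and> cns c w 0 = i then 0 else cns c w m)"
    by (rule gen_explicit) (use False in auto)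
  show ?thesis using False unfolding e2 by (auto simp: cns_def split: nat.split)
qed

lemma gen_cns_cases: "gen i (cns c w) = cns d u \<Longrightarrow> i \<noteq> 0 \<Longrightarrow>
   (c = 0 \<and> d = i \<and> u = gen i w) \<or> (c = i \<and> d = 0 \<and> u = w) \<or> (c \<noteq> 0 \<and> c \<noteq> i \<and> d = c \<and> u = w)"
  by (auto simp: gen_cns split: if_splits)

lemma gen_inj_aux: "i \<noteq> 0 \<Longrightarrow> gen i a = gen i b \<Longrightarrow> \<forall>m<N. a m = b m"
proof (induction N arbitrary: a b)
  case 0 then show ?case by simp
next
  case (Suc N)
  obtain a0 a' where a: "a = cns a0 a'" by (metis cns_sh)
  obtain b0 b' where b: "b = cns b0 b'" by (metis cns_sh)
  have eq: "(if a0 = 0 then cns i (gen i a') else if a0 = i then cns 0 a' else cns a0 a') =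
            (if b0 = 0 then cns i (gen i b') else if b0 = i then cns 0 b' else cns b0 b')"
    using Suc.prems(2) unfolding a b gen_cns .
  have "a0 = b0 \<and> (\<forall>m<N. a' m = b' m)"
  proof (cases "a0 = 0")
    case True
    then have "b0 = 0 \<and> gen i a' = gen i b'" using eq Suc.prems(1)
      by (cases "b0 = 0"; cases "b0 = i") auto
    then show ?thesis using True Suc.IH[OF Suc.prems(1), of a' b'] by auto
  next
    case False
    then show ?thesis using eq Suc.prems(1)
      by (cases "a0 = i"; cases "b0 = 0"; cases "b0 = i") auto
  qed
  then show ?case using a b by (auto simp: less_Suc_eq_0_disj)
qed

lemma gen_inj: "i \<noteq> 0 \<Longrightarrow> gen i a = gen i b \<Longrightarrow> a = b"
  using gen_inj_aux[of i a b] by (metis ext lessI)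

lemma pre_Suc: "pre (Suc n) a T = cns a (pre n a T)"
  by (auto simp: pre_def cns_def split: nat.split)
lemma pre_0[simp]: "pre 0 a T = T" by (simp add: pre_def)
lemma pre_Suc': "pre (Suc n) a T = pre n a (cns a T)"
proof (rule ext)
  fix m show "pre (Suc n) a T m = pre n a (cns a T) m"
  proof (cases "m < n")
    case True then show ?thesis by (simp add: pre_def)
  next
    case False
    show ?thesis
    proof (cases "m = n")
      case True then show ?thesis by (simp add: pre_def)
    next
      case False2: False
      then have "m - n = Suc (m - Suc n)" using False by arith
      then show ?thesis using False False2 by (simp add: pre_def)
    qed
  qed
qed

lemma gen_pre0: "gen i (pre n 0 T) = pre n i (gen i T)"
  by (induction n) (auto simp: pre_Suc gen_cns)

lemma gen_G1: "\<exists>m<n. y m \<noteq> 0 \<Longrightarrow> m \<ge> n \<Longrightarrow> gen i y m = y m"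
proof -
  assume a: "\<exists>m<n. y m \<noteq> 0" "m \<ge> n"
  define k where "k = (LEAST m. y m \<noteq> 0)"
  have ex: "\<exists>m. y m \<noteq> 0" using a(1) by auto
  have k1: "y k \<noteq> 0" using LeastI_ex[OF ex] unfolding k_def .
  have k2: "\<forall>m<k. y m = 0"
    proof (intro allI impI)
      fix m assume "m < k"
      then show "y m = 0" using not_less_Least[of m "\<lambda>m. y m \<noteq> 0"] unfolding k_def by simp
    qed
  obtain m0 where m0: "m0 < n" "y m0 \<noteq> 0" using a(1) by auto
  have "k \<le> m0" using k2 m0(2) not_less by auto
  then have "k < n" using m0(1) by simp
  then show ?thesis using gen_explicit[OF k1 k2, of i] a by auto
qed

lemma zero_pre: "\<forall>m<n. y m = 0 \<Longrightarrow> y = pre n 0 (shn n y)"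
  by (auto simp: pre_def shn_def)

lemma shn_pre[simp]: "shn n (pre n a T) = T" by (auto simp: pre_def shn_def)

lemma adj_iff: "(a,b) \<in> adj p \<longleftrightarrow> (\<exists>i\<in>{1..p}. b = gen i a \<or> a = gen i b)"
  unfolding adj_def by blast

lemma adj_sym: "(a,b) \<in> adj p \<Longrightarrow> (b,a) \<in> adj p"
  unfolding adj_iff by metis

lemma adj_gen: "i \<in> {1..p} \<Longrightarrow> (a, gen i a) \<in> adj p"
  unfolding adj_iff by blast

lemma restr_sym: "sym (Restr (adj p) S)"
  unfolding sym_def using adj_sym by blast

lemma rt_sym: "(a,b) \<in> (Restr (adj p) S)\<^sup>* \<Longrightarrow> (b,a) \<in> (Restr (adj p) S)\<^sup>*"
  by (metis restr_sym sym_rtrancl symE)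

lemma rt_mono: "S \<subseteq> S' \<Longrightarrow> (a,b) \<in> (Restr (adj p) S)\<^sup>* \<Longrightarrow> (a,b) \<in> (Restr (adj p) S')\<^sup>*"
proof -
  assume a: "S \<subseteq> S'" "(a,b) \<in> (Restr (adj p) S)\<^sup>*"
  have "Restr (adj p) S \<subseteq> Restr (adj p) S'" using a(1) by auto
  then show ?thesis using a(2) rtrancl_mono by blast
qed

lemma rt_step: "(a,b) \<in> adj p \<Longrightarrow> a \<in> S \<Longrightarrow> b \<in> S \<Longrightarrow> (a,b) \<in> (Restr (adj p) S)\<^sup>*"
  by auto

lemma gen_val: "gen i s m = i \<or> gen i s m = 0 \<and> s m = i \<or> gen i s m = s m"
  unfolding gen_app by auto

lemma gen_val2: "gen i s m = i \<and> s m = 0 \<or> gen i s m = 0 \<and> s m = i \<or> gen i s m = s m"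
  unfolding gen_app by (cases "\<forall>m'\<le>m. s m' = 0") auto

lemma gen_Xinf: "u \<in> Xinf p \<Longrightarrow> i \<le> p \<Longrightarrow> gen i u \<in> Xinf p"
  unfolding Xinf_def
proof (intro CollectI allI)
  fix m assume "u \<in> {w. \<forall>n. w n \<le> p}" "i \<le> p"
  then show "gen i u m \<le> p" using gen_val[of i u m] by auto
qed

lemma gen_Xinf_rev: "gen i u \<in> Xinf p \<Longrightarrow> i \<le> p \<Longrightarrow> u \<in> Xinf p"
  unfolding Xinf_def
proof (intro CollectI allI)
  fix m assume a: "gen i u \<in> {w. \<forall>n. w n \<le> p}" "i \<le> p"
  then have "gen i u m \<le> p" by auto
  then show "u m \<le> p" using gen_val2[of i u m] a(2) by auto
qed

lemma adj_Xinf: "(a,b) \<in> adj p \<Longrightarrow> a \<in> Xinf p \<Longrightarrow> b \<in> Xinf p"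
  unfolding adj_iff using gen_Xinf gen_Xinf_rev by (metis atLeastAtMost_iff)

lemma orbit_refl: "v \<in> orbit p v" by (simp add: orbit_def)

lemma orbit_adj: "u \<in> orbit p v \<Longrightarrow> (u,w) \<in> adj p \<Longrightarrow> w \<in> orbit p v"
  unfolding orbit_def by (simp add: rtrancl_into_rtrancl)

lemma rt_adj_sym: "(a,b) \<in> (adj p)\<^sup>* \<Longrightarrow> (b,a) \<in> (adj p)\<^sup>*"
proof -
  have "sym (adj p)" unfolding sym_def using adj_sym by blast
  then show "(a,b) \<in> (adj p)\<^sup>* \<Longrightarrow> (b,a) \<in> (adj p)\<^sup>*" by (metis sym_rtrancl symE)
qed

lemma orbit_eq: "u \<in> orbit p v \<Longrightarrow> orbit p u = orbit p v"
  unfolding orbit_def using rt_adj_sym by (auto intro: rtrancl_trans)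

lemma orbit_Xinf: "v \<in> Xinf p \<Longrightarrow> orbit p v \<subseteq> Xinf p"
proof
  fix w assume v: "v \<in> Xinf p" and "w \<in> orbit p v"
  then have "(v,w) \<in> (adj p)\<^sup>*" by (simp add: orbit_def)
  then show "w \<in> Xinf p" by induction (use v adj_Xinf in auto)
qed

lemma rt_sub_adj: "(a,b) \<in> (Restr (adj p) A)\<^sup>* \<Longrightarrow> (a,b) \<in> (adj p)\<^sup>*"
proof -
  assume a: "(a,b) \<in> (Restr (adj p) A)\<^sup>*"
  have "Restr (adj p) A \<subseteq> adj p" by auto
  then show ?thesis using a rtrancl_mono by blast
qed

lemma rt_orbit: "(a,b) \<in> (Restr (adj p) A)\<^sup>* \<Longrightarrow> a \<in> orbit p v \<Longrightarrow> b \<in> orbit p v"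
proof -
  assume a: "(a,b) \<in> (Restr (adj p) A)\<^sup>*" "a \<in> orbit p v"
  have "(a,b) \<in> (adj p)\<^sup>*" by (rule rt_sub_adj[OF a(1)])
  then show ?thesis using a(2) unfolding orbit_def by (simp add: rtrancl_trans)
qed

lemma rt_Restr_orbit: "(a,b) \<in> (Restr (adj p) A)\<^sup>* \<Longrightarrow> a \<in> orbit p v \<Longrightarrow>
   (a,b) \<in> (Restr (adj p) (A \<inter> orbit p v))\<^sup>*"
proof (induction rule: rtrancl_induct)
  case base then show ?case by simp
next
  case (step y z)
  have "(a,y) \<in> (Restr (adj p) A)\<^sup>*" using step.hyps(1) .
  then have "y \<in> orbit p v" using step.prems rt_orbit by blast
  then have "z \<in> orbit p v" using step.hyps(2) orbit_adj by auto
  then have "(y,z) \<in> Restr (adj p) (A \<inter> orbit p v)" using step.hyps(2) \<open>y \<in> orbit p v\<close> by auto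
  then show ?case using step.IH step.prems by (simp add: rtrancl.rtrancl_into_rtrancl)
qed

lemma comp_eq: "(u,z) \<in> (Restr (adj p) S)\<^sup>* \<Longrightarrow> comp p S u = comp p S z"
  unfolding comp_def using rt_sym by (blast intro: rtrancl_trans)

lemma comp_self: "u \<in> comp p S u" by (simp add: comp_def)

definition piece :: "nat \<Rightarrow> nat \<Rightarrow> word \<Rightarrow> word set" where
  "piece p n y = {z \<in> Xinf p. \<forall>m\<ge>n. z m = y m}"

lemma lift_step:
  assumes "i \<in> {1..p}" "cns 0 y \<in> R" "cns i (gen i y) \<in> R" "cns 0 (gen i y) \<in> R"
  shows "(cns 0 y, cns 0 (gen i y)) \<in> (Restr (adj p) R)\<^sup>*"
proof -
  have i0: "i \<noteq> 0" using assms(1) by auto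
  have e1: "(cns 0 y, cns i (gen i y)) \<in> adj p"
    using adj_gen[OF assms(1), of "cns 0 y"] by (simp add: gen_cns)
  have e2: "(cns i (gen i y), cns 0 (gen i y)) \<in> adj p"
    using adj_gen[OF assms(1), of "cns i (gen i y)"] i0 by (simp add: gen_cns)
  have s1: "(cns 0 y, cns i (gen i y)) \<in> Restr (adj p) R" using e1 assms(2,3) by simp
  have s2: "(cns i (gen i y), cns 0 (gen i y)) \<in> Restr (adj p) R" using e2 assms(3,4) by simp
  show ?thesis by (rule rtrancl_into_rtrancl[OF r_into_rtrancl[OF s1] s2])
qed

lemma lift0:
  assumes "(r, r') \<in> (Restr (adj p) S)\<^sup>*" "\<forall>s\<in>S. \<forall>c\<le>p. cns c s \<in> R" "r \<in> S"
  shows "(cns 0 r, cns 0 r') \<in> (Restr (adj p) R)\<^sup>*"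
  using assms(1,3)
proof (induction rule: rtrancl_induct)
  case base then show ?case by simp
next
  case (step y z)
  have yz: "y \<in> S" "z \<in> S" "(y,z) \<in> adj p" using step.hyps(2) by auto
  then obtain i where i: "i \<in> {1..p}" "z = gen i y \<or> y = gen i z" unfolding adj_iff by blast
  have ip: "i \<le> p" using i by auto
  have "(cns 0 y, cns 0 z) \<in> (Restr (adj p) R)\<^sup>*"
  proof (cases "z = gen i y")
    case True
    show ?thesis unfolding True
      by (rule lift_step[OF i(1)]) (use assms(2) yz True ip in auto)
  next
    case False
    then have y: "y = gen i z" using i by auto
    have "(cns 0 z, cns 0 y) \<in> (Restr (adj p) R)\<^sup>*" unfolding y
      by (rule lift_step[OF i(1)]) (use assms(2) yz y ip in auto)
    then show ?thesis by (rule rt_sym)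
  qed
  then show ?case using step.IH step.prems by (meson rtrancl_trans)
qed

lemma sh_Xinf: "y \<in> Xinf p \<Longrightarrow> sh y \<in> Xinf p" by (simp add: Xinf_def sh_def)
lemma cns_Xinf: "y \<in> Xinf p \<Longrightarrow> c \<le> p \<Longrightarrow> cns c y \<in> Xinf p"
  by (simp add: Xinf_def cns_def split: nat.split)

lemma to_cns0:
  assumes "y \<in> R" "cns 0 (sh y) \<in> R" "y \<in> Xinf p"
  shows "(y, cns 0 (sh y)) \<in> (Restr (adj p) R)\<^sup>*"
proof (cases "y 0 = 0")
  case True
  then have "cns 0 (sh y) = y" by (metis cns_sh)
  then show ?thesis by simp
next
  case False
  have i: "y 0 \<in> {1..p}" using False assms(3) by (auto simp: Xinf_def)
  have "gen (y 0) y = cns 0 (sh y)" by (metis cns_sh gen_cns False)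
  then have "(y, cns 0 (sh y)) \<in> adj p" using adj_gen[OF i, of y] by simp
  then show ?thesis using assms by auto
qed

lemma PC: "y \<in> Xinf p \<Longrightarrow> y' \<in> Xinf p \<Longrightarrow> \<forall>m\<ge>n. y' m = y m \<Longrightarrow>
   (y, y') \<in> (Restr (adj p) (piece p n y))\<^sup>*"
proof (induction n arbitrary: y y')
  case 0
  then have "y' = y" by auto
  then show ?case by simp
next
  case (Suc n)
  have sx: "sh y \<in> Xinf p" "sh y' \<in> Xinf p" using Suc.prems by (auto intro: sh_Xinf)
  have ag: "\<forall>m\<ge>n. sh y' m = sh y m" using Suc.prems(3) by (simp add: sh_def)
  have IH: "(sh y, sh y') \<in> (Restr (adj p) (piece p n (sh y)))\<^sup>*" by (rule Suc.IH[OF sx ag])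
  define R where "R = piece p (Suc n) y"
  have cR: "\<forall>s\<in>piece p n (sh y). \<forall>c\<le>p. cns c s \<in> R"
  proof (intro ballI allI impI)
    fix s c assume s: "s \<in> piece p n (sh y)" and c: "c \<le> p"
    show "cns c s \<in> R" unfolding R_def piece_def
    proof (intro CollectI conjI allI impI)
      show "cns c s \<in> Xinf p" using s c cns_Xinf by (auto simp: piece_def)
      fix m assume "Suc n \<le> m"
      then obtain m' where "m = Suc m'" "n \<le> m'" by (metis Suc_le_D Suc_le_mono)
      then show "cns c s m = y m" using s by (auto simp: piece_def sh_def)
    qed
  qed
  have shp: "sh y \<in> piece p n (sh y)" using sx by (simp add: piece_def)
  have m: "(cns 0 (sh y), cns 0 (sh y')) \<in> (Restr (adj p) R)\<^sup>*"
    using lift0[OF IH cR shp] by (simp add: ag sh_def)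
  have yR: "y \<in> R" "y' \<in> R" using Suc.prems by (auto simp: R_def piece_def)
  have c0: "cns 0 (sh y) \<in> R" "cns 0 (sh y') \<in> R"
  proof -
    have shp': "sh y' \<in> piece p n (sh y)" using sx(2) ag by (simp add: piece_def)
    show "cns 0 (sh y) \<in> R" using cR[rule_format, OF shp, of 0] by simp
    show "cns 0 (sh y') \<in> R" using cR[rule_format, OF shp', of 0] by simp
  qed
  have a1: "(y, cns 0 (sh y)) \<in> (Restr (adj p) R)\<^sup>*" by (rule to_cns0) (use yR c0 Suc.prems in auto)
  have a2: "(y', cns 0 (sh y')) \<in> (Restr (adj p) R)\<^sup>*" by (rule to_cns0) (use yR c0 Suc.prems in auto)
  show ?case unfolding R_def[symmetric]
    using a1 m rt_sym[OF a2] by (meson rtrancl_trans)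
qed

lemma piece_orbit: "y \<in> Xinf p \<Longrightarrow> piece p n y \<subseteq> orbit p y"
proof
  fix z assume y: "y \<in> Xinf p" and z: "z \<in> piece p n y"
  have "(y, z) \<in> (Restr (adj p) (piece p n y))\<^sup>*" by (rule PC) (use y z in \<open>auto simp: piece_def\<close>)
  then have "(y, z) \<in> (adj p)\<^sup>*" by (rule rt_sub_adj)
  then show "z \<in> orbit p y" by (simp add: orbit_def)
qed

lemma piece_finite: "finite (piece p n y)"
proof -
  have "piece p n y \<subseteq> (\<lambda>g m. if m < n then g m else y m) ` (PiE {..<n} (\<lambda>_. {0..p}))"
  proof
    fix z assume z: "z \<in> piece p n y"
    have "z = (\<lambda>m. if m < n then restrict z {..<n} m else y m)"
      using z by (auto simp: piece_def)
    moreover have "restrict z {..<n} \<in> PiE {..<n} (\<lambda>_. {0..p})"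
      using z by (auto simp: piece_def Xinf_def)
    ultimately show "z \<in> (\<lambda>g m. if m < n then g m else y m) ` (PiE {..<n} (\<lambda>_. {0..p}))" by blast
  qed
  moreover have "finite (PiE {..<n} (\<lambda>_. {0..p::nat}))" by (simp add: finite_PiE)
  ultimately show ?thesis by (meson finite_surj)
qed

lemma piece_self: "y \<in> Xinf p \<Longrightarrow> y \<in> piece p n y" by (simp add: piece_def)

definition icomps :: "nat \<Rightarrow> word set \<Rightarrow> word set set" where
  "icomps p S = {comp p S u | u. u \<in> S \<and> infinite (comp p S u)}"

definition exits :: "nat \<Rightarrow> word \<Rightarrow> word set \<Rightarrow> word set" where
  "exits p v P = {e \<in> orbit p v - P. \<exists>y\<in>P. (e,y) \<in> adj p}"

lemma num_ends_alt: "num_ends p v = (SUP F \<in> {F. finite F \<and> F \<subseteq> orbit p v}. ecard (icomps p (orbit p v - F)))"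
  unfolding num_ends_def icomps_def by simp

lemma comp_mem: "z \<in> comp p S u \<Longrightarrow> u \<in> S \<Longrightarrow> z \<in> S"
proof -
  assume a: "z \<in> comp p S u" "u \<in> S"
  have "(u,z) \<in> (Restr (adj p) S)\<^sup>*" using a(1) by (simp add: comp_def)
  then show ?thesis using a(2) by (induction rule: rtrancl_induct) auto
qed

lemma first_entry_aux:
  "(u,y) \<in> (adj p)\<^sup>* \<Longrightarrow> y \<in> P \<Longrightarrow> u \<in> orbit p v \<Longrightarrow> u \<notin> P \<Longrightarrow>
   \<exists>e\<in>exits p v P. (u,e) \<in> (Restr (adj p) (orbit p v - P))\<^sup>*"
proof (induction rule: converse_rtrancl_induct)
  case base then show ?case by simp
next
  case (step u u1)
  show ?case
  proof (cases "u1 \<in> P")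
    case True
    then have "u \<in> exits p v P" using step unfolding exits_def by auto
    then show ?thesis by auto
  next
    case False
    have "u1 \<in> orbit p v" using orbit_adj step.hyps(1) step.prems(2) by blast
    then obtain e where e: "e \<in> exits p v P" "(u1,e) \<in> (Restr (adj p) (orbit p v - P))\<^sup>*"
      using step.IH step.prems(1) False by blast
    have "(u,u1) \<in> Restr (adj p) (orbit p v - P)"
      using step.hyps(1) step.prems(2,3) False \<open>u1 \<in> orbit p v\<close> by auto
    then show ?thesis using e by (meson converse_rtrancl_into_rtrancl)
  qed
qed

lemma first_entry:
  assumes "u \<in> orbit p v" "u \<notin> P" "y \<in> P" "y \<in> orbit p v"
  shows "\<exists>e\<in>exits p v P. (u,e) \<in> (Restr (adj p) (orbit p v - P))\<^sup>*"
proof -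
  have "(u,y) \<in> (adj p)\<^sup>*"
  proof -
    have "(v,u) \<in> (adj p)\<^sup>*" "(v,y) \<in> (adj p)\<^sup>*" using assms by (auto simp: orbit_def)
    then show ?thesis using rt_adj_sym rtrancl_trans by metis
  qed
  then show ?thesis using first_entry_aux assms by blast
qed

lemma ecard_mono: "A \<subseteq> B \<Longrightarrow> finite B \<Longrightarrow> ecard A \<le> ecard B"
  unfolding ecard_def by (auto simp: card_mono finite_subset)

lemma ecard_ge: "K \<subseteq> A \<Longrightarrow> finite K \<Longrightarrow> enat (card K) \<le> ecard A"
  unfolding ecard_def by (auto simp: card_mono)

lemma ecard_finite: "finite A \<Longrightarrow> ecard A = enat (card A)"
  unfolding ecard_def by simp

lemma icomps_sub_exits:
  assumes "F \<subseteq> P" "P \<subseteq> orbit p v" "finite P" "P \<noteq> {}"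
  shows "icomps p (orbit p v - F) \<subseteq> (\<lambda>e. comp p (orbit p v - F) e) ` exits p v P"
proof
  fix C assume "C \<in> icomps p (orbit p v - F)"
  then obtain u where u: "u \<in> orbit p v - F" "infinite (comp p (orbit p v - F) u)" "C = comp p (orbit p v - F) u"
    unfolding icomps_def by blast
  have "infinite (C - P)" using u(2,3) assms(3) by auto
  then have "C - P \<noteq> {}" by (metis finite.emptyI)
  then obtain z where z: "z \<in> C" "z \<notin> P" by blast
  have zS: "z \<in> orbit p v - F" using comp_mem z(1) u by blast
  obtain y where y: "y \<in> P" using assms(4) by auto
  obtain e where e: "e \<in> exits p v P" "(z,e) \<in> (Restr (adj p) (orbit p v - P))\<^sup>*"
    using first_entry[of z p v P y] zS z(2) y assms(2) by blast
  have "(z,e) \<in> (Restr (adj p) (orbit p v - F))\<^sup>*" by (rule rt_mono[OF _ e(2)]) (use assms(1) in auto)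
  then have "comp p (orbit p v - F) z = comp p (orbit p v - F) e" by (rule comp_eq)
  moreover have "comp p (orbit p v - F) u = comp p (orbit p v - F) z"
    using z(1) u(3) comp_eq unfolding comp_def by (metis mem_Collect_eq)
  ultimately show "C \<in> (\<lambda>e. comp p (orbit p v - F) e) ` exits p v P" using e(1) u(3) by auto
qed

lemma finite_preimage_gen: "i \<in> {1..p} \<Longrightarrow> finite {u. gen i u = y}"
proof -
  assume i: "i \<in> {1..p}"
  have "{u. gen i u = y} \<subseteq> {THE u. gen i u = y}"
    using gen_inj[of i] i by (auto intro: the_equality[symmetric])
  then show ?thesis by (rule finite_subset) simp
qed

lemma exits_finite: "finite P \<Longrightarrow> finite (exits p v P)"
proof -
  assume P: "finite P"
  have "exits p v P \<subseteq> (\<Union>y\<in>P. \<Union>i\<in>{1..p}. {gen i y} \<union> {u. gen i u = y})"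
    unfolding exits_def adj_iff by auto
  moreover have "finite (\<Union>y\<in>P. \<Union>i\<in>{1..p}. {gen i y} \<union> {u. gen i u = y})"
    using P finite_preimage_gen by auto
  ultimately show ?thesis by (rule finite_subset)
qed

lemma cnt_le_exits:
  assumes "F \<subseteq> P" "P \<subseteq> orbit p v" "finite P" "P \<noteq> {}"
  shows "ecard (icomps p (orbit p v - F)) \<le> enat (card (exits p v P))"
proof -
  have fe: "finite (exits p v P)" by (rule exits_finite[OF assms(3)])
  have "ecard (icomps p (orbit p v - F)) \<le> ecard ((\<lambda>e. comp p (orbit p v - F) e) ` exits p v P)"
    by (rule ecard_mono[OF icomps_sub_exits[OF assms]]) (use fe in auto)
  also have "\<dots> \<le> enat (card (exits p v P))" using fe by (simp add: ecard_finite card_image_le)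
  finally show ?thesis .
qed

lemma cnt_le_one:
  assumes "F \<subseteq> P" "P \<subseteq> orbit p v" "finite P" "P \<noteq> {}"
    and "\<forall>e\<in>exits p v P. (e0, e) \<in> (Restr (adj p) (orbit p v - P))\<^sup>*"
  shows "ecard (icomps p (orbit p v - F)) \<le> 1"
proof -
  have "(\<lambda>e. comp p (orbit p v - F) e) ` exits p v P \<subseteq> {comp p (orbit p v - F) e0}"
  proof
    fix C assume "C \<in> (\<lambda>e. comp p (orbit p v - F) e) ` exits p v P"
    then obtain e where e: "e \<in> exits p v P" "C = comp p (orbit p v - F) e" by auto
    have "(e0, e) \<in> (Restr (adj p) (orbit p v - F))\<^sup>*"
      by (rule rt_mono[OF _ assms(5)[rule_format, OF e(1)]]) (use assms(1) in auto)
    then show "C \<in> {comp p (orbit p v - F) e0}" using e(2) comp_eq by auto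
  qed
  then have "icomps p (orbit p v - F) \<subseteq> {comp p (orbit p v - F) e0}"
    using icomps_sub_exits[OF assms(1-4)] by auto
  then have "ecard (icomps p (orbit p v - F)) \<le> ecard {comp p (orbit p v - F) e0}"
    by (rule ecard_mono) simp
  then show ?thesis by (simp add: ecard_finite one_enat_def)
qed

lemma num_ends_le:
  "(\<And>F. finite F \<Longrightarrow> F \<subseteq> orbit p v \<Longrightarrow> ecard (icomps p (orbit p v - F)) \<le> k) \<Longrightarrow> num_ends p v \<le> k"
  unfolding num_ends_alt by (rule SUP_least) auto

lemma num_ends_ge:
  "finite F \<Longrightarrow> F \<subseteq> orbit p v \<Longrightarrow> k \<le> ecard (icomps p (orbit p v - F)) \<Longrightarrow> k \<le> num_ends p v"
  unfolding num_ends_alt by (rule SUP_upper2[of F]) auto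

lemma lab_const:
  assumes "(a,b) \<in> (Restr (adj p) S)\<^sup>*"
    and "\<And>x y. (x,y) \<in> Restr (adj p) S \<Longrightarrow> lab x = lab y"
  shows "lab a = lab b"
  using assms(1) by induction (use assms(2) in auto)

lemma comp_in_exit_infinite:
  assumes "infinite V" "V \<subseteq> orbit p v - P" "P \<subseteq> orbit p v" "finite P" "P \<noteq> {}"
  shows "\<exists>e\<in>exits p v P. infinite (V \<inter> comp p (orbit p v - P) e)"
proof (rule ccontr)
  assume "\<not> ?thesis"
  then have fin: "\<forall>e\<in>exits p v P. finite (V \<inter> comp p (orbit p v - P) e)" by auto
  obtain y where y: "y \<in> P" using assms(5) by auto
  have "V \<subseteq> (\<Union>e\<in>exits p v P. V \<inter> comp p (orbit p v - P) e)"
  proof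
    fix z assume z: "z \<in> V"
    then obtain e where e: "e \<in> exits p v P" "(z,e) \<in> (Restr (adj p) (orbit p v - P))\<^sup>*"
      using first_entry[of z p v P y] assms(2,3) y by blast
    have "z \<in> comp p (orbit p v - P) e" using rt_sym[OF e(2)] by (simp add: comp_def)
    then show "z \<in> (\<Union>e\<in>exits p v P. V \<inter> comp p (orbit p v - P) e)" using e(1) z by auto
  qed
  moreover have "finite (\<Union>e\<in>exits p v P. V \<inter> comp p (orbit p v - P) e)"
    by (rule finite_UN_I) (use fin exits_finite[OF assms(4)] in auto)
  ultimately show False using assms(1) finite_subset by blast
qed

lemma labels_lower:
  fixes lab :: "word \<Rightarrow> 'l" and L :: "'l set"
  assumes "P \<subseteq> orbit p v" "finite P" "P \<noteq> {}" "finite L"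
    and inv: "\<And>x y. (x,y) \<in> Restr (adj p) (orbit p v - P) \<Longrightarrow> lab x = lab y"
    and V: "\<And>l. l \<in> L \<Longrightarrow> infinite (V l) \<and> V l \<subseteq> orbit p v - P \<and> (\<forall>x\<in>V l. lab x = l)"
  shows "enat (card L) \<le> ecard (icomps p (orbit p v - P))"
proof -
  have "\<forall>l\<in>L. \<exists>e. e \<in> exits p v P \<and> infinite (V l \<inter> comp p (orbit p v - P) e)"
    using comp_in_exit_infinite[OF _ _ assms(1-3)] V by blast
  then obtain ef where ef: "\<And>l. l \<in> L \<Longrightarrow> ef l \<in> exits p v P \<and> infinite (V l \<inter> comp p (orbit p v - P) (ef l))"
    by metis
  define cf where "cf l = comp p (orbit p v - P) (ef l)" for l
  have lab_c: "\<forall>x\<in>cf l. lab x = l" if l: "l \<in> L" for l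
  proof -
    have "V l \<inter> cf l \<noteq> {}" using ef[OF l] unfolding cf_def by (metis finite.emptyI)
    then obtain x0 where x0: "x0 \<in> V l" "x0 \<in> cf l" by blast
    have "lab x0 = l" using V[OF l] x0(1) by auto
    show ?thesis
    proof
      fix x assume "x \<in> cf l"
      then have "lab (ef l) = lab x" unfolding cf_def comp_def by (auto intro: lab_const inv)
      moreover have "lab (ef l) = lab x0" using x0(2) unfolding cf_def comp_def by (auto intro: lab_const inv)
      ultimately show "lab x = l" using \<open>lab x0 = l\<close> by simp
    qed
  qed
  have inj: "inj_on cf L"
  proof (rule inj_onI)
    fix l1 l2 assume l: "l1 \<in> L" "l2 \<in> L" "cf l1 = cf l2"
    have "ef l1 \<in> cf l1" unfolding cf_def by (rule comp_self)
    then show "l1 = l2" using lab_c[OF l(1)] lab_c[OF l(2)] l(3) by auto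
  qed
  have sub: "cf ` L \<subseteq> icomps p (orbit p v - P)"
  proof
    fix C assume "C \<in> cf ` L"
    then obtain l where l: "l \<in> L" "C = cf l" by auto
    have "ef l \<in> orbit p v - P" using ef[OF l(1)] unfolding exits_def by auto
    moreover have "infinite (cf l)" using ef[OF l(1)] unfolding cf_def by (meson finite_Int)
    ultimately show "C \<in> icomps p (orbit p v - P)" using l unfolding icomps_def cf_def by auto
  qed
  have "enat (card (cf ` L)) \<le> ecard (icomps p (orbit p v - P))"
    by (rule ecard_ge[OF sub]) (use assms(4) in auto)
  then show ?thesis using card_image[OF inj] by simp
qed

lemma gen_cof: "s \<noteq> (\<lambda>_. 0) \<Longrightarrow> \<exists>k. (\<forall>m<k. s m = 0) \<and> s k \<noteq> 0 \<and> (\<forall>m>k. gen i s m = s m)"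
proof -
  assume "s \<noteq> (\<lambda>_. 0)"
  then have ex: "\<exists>m. s m \<noteq> 0" by auto
  define k where "k = (LEAST m. s m \<noteq> 0)"
  have k1: "s k \<noteq> 0" using LeastI_ex[OF ex] unfolding k_def .
  have k2: "\<forall>m<k. s m = 0"
  proof (intro allI impI)
    fix m assume "m < k"
    then show "s m = 0" using not_less_Least[of m "\<lambda>m. s m \<noteq> 0"] unfolding k_def by simp
  qed
  show ?thesis using k1 k2 gen_explicit[OF k1 k2, of i] by auto
qed

definition evconst :: "word \<Rightarrow> bool" where
  "evconst y \<longleftrightarrow> (\<exists>j N. \<forall>m\<ge>N. y m = j)"

definition Aset :: "nat \<Rightarrow> word set" where
  "Aset p = {y \<in> Xinf p. evconst y}"

lemma evconst_shift_agree: "\<forall>m>k. a m = b m \<Longrightarrow> evconst a \<longleftrightarrow> evconst b"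
proof -
  assume ag: "\<forall>m>k. a m = b m"
  have *: "evconst a \<Longrightarrow> evconst b" if ag: "\<forall>m>k. a m = b m" for a b
  proof -
    assume "evconst a"
    then obtain j N where jN: "\<forall>m\<ge>N. a m = j" unfolding evconst_def by blast
    have "\<forall>m\<ge>max N (Suc k). b m = j" using jN ag by auto
    then show "evconst b" unfolding evconst_def by blast
  qed
  show ?thesis using *[OF ag] *[of b a] ag by auto
qed

lemma gen_evconst: "evconst s \<Longrightarrow> evconst (gen i s)"
proof (cases "s = (\<lambda>_. 0)")
  case True then show ?thesis by (simp add: gen_zero evconst_def)
next
  case False
  then obtain k where "\<forall>m>k. gen i s m = s m" using gen_cof by blast
  then show "evconst s \<Longrightarrow> ?thesis" using evconst_shift_agree[of k "gen i s" s] by auto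
qed

lemma gen_evconst_rev: "evconst (gen i s) \<Longrightarrow> evconst s"
proof (cases "s = (\<lambda>_. 0)")
  case True then show ?thesis by (simp add: evconst_def)
next
  case False
  then obtain k where "\<forall>m>k. gen i s m = s m" using gen_cof by blast
  then show "evconst (gen i s) \<Longrightarrow> ?thesis" using evconst_shift_agree[of k "gen i s" s] by auto
qed

lemma const_Xinf: "j \<le> p \<Longrightarrow> (\<lambda>_. j) \<in> Xinf p" by (simp add: Xinf_def)

lemma orbit_A: "orbit p (\<lambda>_. 0) = Aset p"
proof
  show "orbit p (\<lambda>_. 0) \<subseteq> Aset p"
  proof
    fix w assume "w \<in> orbit p (\<lambda>_. 0)"
    then have "((\<lambda>_. 0), w) \<in> (adj p)\<^sup>*" by (simp add: orbit_def)
    then show "w \<in> Aset p"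
    proof induction
      case base then show ?case by (simp add: Aset_def Xinf_def evconst_def)
    next
      case (step y z)
      obtain i where i: "i \<in> {1..p}" "z = gen i y \<or> y = gen i z" using step.hyps(2) unfolding adj_iff by blast
      have "z \<in> Xinf p" using adj_Xinf step by (auto simp: Aset_def)
      moreover have "evconst z"
      proof -
        have ey: "evconst y" using step.IH by (simp add: Aset_def)
        show ?thesis
        proof (cases "z = gen i y")
          case True then show ?thesis using gen_evconst[OF ey] by simp
        next
          case False then have "y = gen i z" using i(2) by simp
          then show ?thesis using ey gen_evconst_rev[of i z] by simp
        qed
      qed
      ultimately show ?case by (simp add: Aset_def)
    qed
  qed
next
  show "Aset p \<subseteq> orbit p (\<lambda>_. 0)"
  proof
    fix y assume y: "y \<in> Aset p"
    then obtain j N where jN: "\<forall>m\<ge>N. y m = j" unfolding Aset_def evconst_def by blast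
    have jp: "j \<le> p" using y jN by (auto simp: Aset_def Xinf_def)
    have "y \<in> piece p N (\<lambda>_. j)" using y jN by (auto simp: piece_def Aset_def)
    then have y1: "y \<in> orbit p (\<lambda>_. j)" using piece_orbit[OF const_Xinf[OF jp]] by auto
    have "(\<lambda>_. j) \<in> orbit p (\<lambda>_. 0)"
    proof (cases "j = 0")
      case True then show ?thesis by (simp add: orbit_refl)
    next
      case False
      then have "((\<lambda>_. 0), (\<lambda>_. j)) \<in> adj p" using adj_gen[of j p "\<lambda>_. 0"] jp by (simp add: gen_zero)
      then show ?thesis by (simp add: orbit_def)
    qed
    then show "y \<in> orbit p (\<lambda>_. 0)" using y1 orbit_eq by auto
  qed
qed

lemma orbit_A': "v \<in> Aset p \<Longrightarrow> orbit p v = Aset p"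
  using orbit_A orbit_eq by metis

definition PA :: "nat \<Rightarrow> nat \<Rightarrow> word set" where
  "PA p n = {y \<in> Xinf p. \<exists>j. \<forall>m\<ge>n. y m = j}"

lemma PA_sub: "PA p n \<subseteq> Aset p"
proof
  fix y assume "y \<in> PA p n"
  then show "y \<in> Aset p" unfolding Aset_def evconst_def PA_def by blast
qed

lemma PA_finite: "finite (PA p n)"
proof -
  have "PA p n \<subseteq> (\<Union>j\<in>{0..p}. piece p n (\<lambda>_. j))"
  proof
    fix y assume "y \<in> PA p n"
    then obtain j where j: "y \<in> Xinf p" "\<forall>m\<ge>n. y m = j" unfolding PA_def by blast
    then have "y n = j" by simp
    then have "j \<le> p" using j(1) by (auto simp: Xinf_def)
    then show "y \<in> (\<Union>j\<in>{0..p}. piece p n (\<lambda>_. j))" using j unfolding piece_def by auto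
  qed
  moreover have "finite (\<Union>j\<in>{0..p}. piece p n (\<lambda>_. j))" by (simp add: piece_finite)
  ultimately show ?thesis by (rule finite_subset)
qed

lemma PA_ne: "(\<lambda>_. 0) \<in> PA p n" by (simp add: PA_def Xinf_def)

lemma F_in_PA:
  assumes "finite F" "F \<subseteq> Aset p"
  shows "\<exists>N. F \<subseteq> PA p N"
proof -
  have "\<forall>y\<in>F. \<exists>N. \<forall>m\<ge>N. y m = y N"
  proof
    fix y assume "y \<in> F"
    then obtain j N where "\<forall>m\<ge>N. y m = j" using assms(2) unfolding Aset_def evconst_def by blast
    then show "\<exists>N. \<forall>m\<ge>N. y m = y N" by auto
  qed
  then obtain f where f: "\<forall>y\<in>F. \<forall>m\<ge>f y. y m = y (f y)" by metis
  define N where "N = (\<Sum>y\<in>F. f y)"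
  have "\<forall>y\<in>F. f y \<le> N" unfolding N_def using assms(1) by (simp add: member_le_sum)
  then have "\<forall>y\<in>F. \<forall>m\<ge>N. y m = y N" using f by (metis le_trans)
  then show ?thesis using assms(2) unfolding PA_def Aset_def by auto
qed

lemma gen_const: "gen i (\<lambda>_. j) = (if j = 0 then (\<lambda>_. i) else if j = i then cns 0 (\<lambda>_. i) else (\<lambda>_. j))"
proof -
  have "gen i (\<lambda>_. j) = gen i (cns j (\<lambda>_. j))" by (simp flip: const_cns)
  also have "\<dots> = (if j = 0 then cns i (gen i (\<lambda>_. j)) else if j = i then cns 0 (\<lambda>_. j) else cns j (\<lambda>_. j))"
    by (simp add: gen_cns)
  finally show ?thesis by (auto simp: gen_zero simp flip: const_cns)
qed

lemma gen_pre_const: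
  assumes "i \<in> {1..p}" "gen i T = (\<lambda>_. j)"
  shows "(j = 0 \<and> T = cns i (\<lambda>_. 0)) \<or> (j = i \<and> T = (\<lambda>_. 0)) \<or> (j \<noteq> 0 \<and> j \<noteq> i \<and> T = (\<lambda>_. j))"
proof -
  have i0: "i \<noteq> 0" using assms(1) by auto
  consider "j = 0" | "j = i" | "j \<noteq> 0 \<and> j \<noteq> i" by blast
  then show ?thesis
  proof cases
    case 1
    have "gen i (cns i (\<lambda>_. 0)) = (\<lambda>_. j)" using 1 i0 by (simp add: gen_cns flip: const_cns)
    then show ?thesis using gen_inj[OF i0] assms(2) 1 by metis
  next
    case 2
    have "gen i (\<lambda>_. 0) = (\<lambda>_. j)" using 2 by (simp add: gen_zero)
    then show ?thesis using gen_inj[OF i0] assms(2) 2 by metis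
  next
    case 3
    have "gen i (\<lambda>_. j) = (\<lambda>_. j)" using 3 by (simp add: gen_const)
    then show ?thesis using gen_inj[OF i0] assms(2) 3 by metis
  qed
qed

lemma pre_const_PA: "e \<in> Xinf p \<Longrightarrow> e = pre n a (\<lambda>_. b) \<Longrightarrow> e \<in> PA p n"
  unfolding PA_def pre_def by auto

lemma PA_D: "y \<in> PA p n \<Longrightarrow> m \<ge> n \<Longrightarrow> y m = y n"
  unfolding PA_def by auto

lemma PA_I: "y \<in> Xinf p \<Longrightarrow> (\<And>m. m \<ge> n \<Longrightarrow> y m = y n) \<Longrightarrow> y \<in> PA p n"
proof -
  assume a: "y \<in> Xinf p" and b: "\<And>m. m \<ge> n \<Longrightarrow> y m = y n"
  have "\<forall>m\<ge>n. y m = y n" using b by blast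
  then show ?thesis using a unfolding PA_def by blast
qed

lemma agree_PA: "y \<in> PA p n \<Longrightarrow> e \<in> Xinf p \<Longrightarrow> (\<And>m. m \<ge> n \<Longrightarrow> e m = y m) \<Longrightarrow> e \<in> PA p n"
proof -
  assume a: "y \<in> PA p n" "e \<in> Xinf p" "\<And>m. m \<ge> n \<Longrightarrow> e m = y m"
  show ?thesis
  proof (rule PA_I[OF a(2)])
    fix m assume m: "m \<ge> n"
    have "e m = y m" using a(3)[OF m] .
    also have "\<dots> = y n" using PA_D[OF a(1) m] .
    also have "\<dots> = e n" using a(3)[of n] by simp
    finally show "e m = e n" .
  qed
qed

lemma shn_PA: "y \<in> PA p n \<Longrightarrow> shn n y = (\<lambda>_. y n)"
proof (rule ext)
  fix m assume "y \<in> PA p n"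
  then show "shn n y m = y n" unfolding shn_def using PA_D[of y p n "m+n"] by simp
qed

lemma exits_A:
  "exits p (\<lambda>_. 0) (PA p n) \<subseteq> (\<lambda>i. pre n i (cns 0 (\<lambda>_. i))) ` {1..p} \<union> (\<lambda>i. pre n 0 (cns i (\<lambda>_. 0))) ` {1..p}"
proof
  fix e assume e: "e \<in> exits p (\<lambda>_. 0) (PA p n)"
  then obtain y where y: "y \<in> PA p n" "(e,y) \<in> adj p" and eo: "e \<in> Aset p" "e \<notin> PA p n"
    unfolding exits_def orbit_A by auto
  have eX: "e \<in> Xinf p" using eo by (simp add: Aset_def)
  obtain i where i: "i \<in> {1..p}" "y = gen i e \<or> e = gen i y" using y(2) unfolding adj_iff by blast
  have shy: "shn n y = (\<lambda>_. y n)" using shn_PA[OF y(1)] .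
  show "e \<in> (\<lambda>i. pre n i (cns 0 (\<lambda>_. i))) ` {1..p} \<union> (\<lambda>i. pre n 0 (cns i (\<lambda>_. 0))) ` {1..p}"
  proof (cases "e = gen i y")
    case True
    show ?thesis
    proof (cases "\<exists>m<n. y m \<noteq> 0")
      case True2: True
      have "e m = y m" if "m \<ge> n" for m using gen_G1[OF True2 that, of i] True by simp
      then have "e \<in> PA p n" using agree_PA[OF y(1) eX] by blast
      then show ?thesis using eo by simp
    next
      case False
      then have "y = pre n 0 (shn n y)" using zero_pre by auto
      then have ee: "e = pre n i (gen i (\<lambda>_. y n))" using True shy gen_pre0 by metis
      show ?thesis
      proof (cases "y n = i")
        case True
        then have "e = pre n i (cns 0 (\<lambda>_. i))" using ee i(1) by (simp add: gen_const)
        then show ?thesis using i(1) by auto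
      next
        case False
        then have "\<exists>b. e = pre n i (\<lambda>_. b)" using ee by (auto simp: gen_const)
        then have "e \<in> PA p n" using pre_const_PA eX by metis
        then show ?thesis using eo by simp
      qed
    qed
  next
    case False
    then have yi: "y = gen i e" using i(2) by simp
    show ?thesis
    proof (cases "\<exists>m<n. e m \<noteq> 0")
      case True
      have "e m = y m" if "m \<ge> n" for m using gen_G1[OF True that, of i] yi by simp
      then have "e \<in> PA p n" using agree_PA[OF y(1) eX] by blast
      then show ?thesis using eo by simp
    next
      case False
      then have ez: "e = pre n 0 (shn n e)" using zero_pre by auto
      then have "y = pre n i (gen i (shn n e))" using yi gen_pre0 by metis
      then have "gen i (shn n e) = (\<lambda>_. y n)" using shy by (metis shn_pre)
      note c = gen_pre_const[OF i(1) this]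
      show ?thesis
      proof (cases "y n = 0")
        case True
        then have "e = pre n 0 (cns i (\<lambda>_. 0))" using c ez i(1) by auto
        then show ?thesis using i(1) by auto
      next
        case False
        then have "\<exists>b. e = pre n 0 (\<lambda>_. b)" using c ez by metis
        then have "e \<in> PA p n" using pre_const_PA eX by metis
        then show ?thesis using eo by simp
      qed
    qed
  qed
qed

lemma upper_A:
  assumes "v \<in> Aset p"
  shows "num_ends p v \<le> enat (2*p)"
proof (rule num_ends_le)
  fix F assume F: "finite F" "F \<subseteq> orbit p v"
  have ov: "orbit p v = Aset p" "orbit p (\<lambda>_. 0) = Aset p" using orbit_A'[OF assms] orbit_A by auto
  have FA: "F \<subseteq> Aset p" using F(2) ov by simp
  obtain N where N: "F \<subseteq> PA p N" using F_in_PA[OF F(1) FA] by blast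
  have "ecard (icomps p (orbit p (\<lambda>_. 0) - F)) \<le> enat (card (exits p (\<lambda>_. 0) (PA p N)))"
    by (rule cnt_le_exits[OF N]) (use PA_sub ov PA_finite PA_ne in blast)+
  also have "card (exits p (\<lambda>_. 0) (PA p N)) \<le> 2*p"
  proof -
    have "card (exits p (\<lambda>_. 0) (PA p N)) \<le> card ((\<lambda>i. pre N i (cns 0 (\<lambda>_. i))) ` {1..p} \<union> (\<lambda>i. pre N 0 (cns i (\<lambda>_. 0))) ` {1..p})"
      by (rule card_mono[OF _ exits_A]) simp
    also have "\<dots> \<le> card ((\<lambda>i. pre N i (cns 0 (\<lambda>_. i))) ` {1..p}) + card ((\<lambda>i. pre N 0 (cns i (\<lambda>_. 0))) ` {1..p})"
      by (rule card_Un_le)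
    also have "\<dots> \<le> p + p"
    proof (rule add_mono)
      show "card ((\<lambda>i. pre N i (cns 0 (\<lambda>_. i))) ` {1..p}) \<le> p"
        using card_image_le[of "{1..p}" "\<lambda>i. pre N i (cns 0 (\<lambda>_. i))"] by simp
      show "card ((\<lambda>i. pre N 0 (cns i (\<lambda>_. 0))) ` {1..p}) \<le> p"
        using card_image_le[of "{1..p}" "\<lambda>i. pre N 0 (cns i (\<lambda>_. 0))"] by simp
    qed
    finally show ?thesis by simp
  qed
  finally show "ecard (icomps p (orbit p v - F)) \<le> enat (2*p)" using ov by simp
qed

definition evval :: "word \<Rightarrow> nat" where "evval y = (THE j. \<exists>N. \<forall>m\<ge>N. y m = j)"
definition lastnz :: "word \<Rightarrow> nat" where "lastnz y = y (GREATEST m. y m \<noteq> 0)"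
definition labA :: "word \<Rightarrow> nat \<times> nat" where
  "labA y = (evval y, if evval y = 0 then lastnz y else 0)"

lemma evval_eq: "\<forall>m\<ge>N. y m = j \<Longrightarrow> evval y = j"
  unfolding evval_def
proof (rule the_equality)
  assume a: "\<forall>m\<ge>N. y m = j"
  then show "\<exists>N. \<forall>m\<ge>N. y m = j" by blast
  fix j' assume "\<exists>N. \<forall>m\<ge>N. y m = j'"
  then obtain N' where "\<forall>m\<ge>N'. y m = j'" by blast
  then have "y (max N N') = j'" by simp
  moreover have "y (max N N') = j" using a by simp
  ultimately show "j' = j" by simp
qed

lemma lastnz_eq: "y G \<noteq> 0 \<Longrightarrow> \<forall>m>G. y m = 0 \<Longrightarrow> lastnz y = y G"
proof -
  assume a: "y G \<noteq> 0" "\<forall>m>G. y m = 0"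
  have "(GREATEST m. y m \<noteq> 0) = G"
  proof (rule Greatest_equality)
    show "y G \<noteq> 0" by (rule a(1))
    show "\<And>m. y m \<noteq> 0 \<Longrightarrow> m \<le> G" using a(2) by (metis not_le)
  qed
  then show ?thesis unfolding lastnz_def by simp
qed

lemma exists_last:
  fixes s :: word
  assumes "s k \<noteq> 0" "\<forall>m\<ge>N. s m = 0"
  shows "\<exists>G\<ge>k. s G \<noteq> 0 \<and> (\<forall>m>G. s m = 0)"
proof -
  define S where "S = {m. s m \<noteq> 0}"
  have "S \<subseteq> {..<N}"
  proof
    fix m assume "m \<in> S"
    then have "s m \<noteq> 0" by (simp add: S_def)
    have "\<not> N \<le> m"
    proof
      assume "N \<le> m"
      then have "s m = 0" using assms(2) by simp
      then show False using \<open>s m \<noteq> 0\<close> by simp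
    qed
    then show "m \<in> {..<N}" by simp
  qed
  then have fS: "finite S" using finite_subset by blast
  have kS: "k \<in> S" using assms(1) by (simp add: S_def)
  define G where "G = Max S"
  have "G \<in> S" using fS kS unfolding G_def by (metis Max_in empty_iff)
  moreover have "k \<le> G" using fS kS unfolding G_def by simp
  moreover have "\<forall>m>G. s m = 0"
  proof (intro allI impI)
    fix m assume "m > G"
    then have "m \<notin> S" using fS unfolding G_def by (metis Max_ge not_le)
    then show "s m = 0" by (simp add: S_def)
  qed
  ultimately show ?thesis by (auto simp: S_def)
qed

lemma labA_inv:
  assumes i: "i \<in> {1..p}" and s: "s \<in> Aset p" "s \<notin> PA p 0" and g: "gen i s \<notin> PA p 0"
  shows "labA (gen i s) = labA s"
proof -
  have sX: "s \<in> Xinf p" using s by (simp add: Aset_def)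
  have gX: "gen i s \<in> Xinf p" using gen_Xinf sX i by auto
  have "s \<noteq> (\<lambda>_. 0)" using s(2) PA_ne by metis
  then have ex: "\<exists>m. s m \<noteq> 0" by auto
  define k where "k = (LEAST m. s m \<noteq> 0)"
  have k1: "s k \<noteq> 0" using LeastI_ex[OF ex] unfolding k_def .
  have k2: "\<forall>m<k. s m = 0"
  proof (intro allI impI)
    fix m assume "m < k"
    then show "s m = 0" using not_less_Least[of m "\<lambda>m. s m \<noteq> 0"] unfolding k_def by simp
  qed
  have ge: "gen i s = (\<lambda>m. if m < k then i else if m = k \<and> s k = i then 0 else s m)"
    by (rule gen_explicit[OF k1 k2])
  obtain j N0 where jN0: "\<forall>m\<ge>N0. s m = j" using s(1) unfolding Aset_def evconst_def by blast
  define N where "N = max N0 (Suc k)"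
  have jN: "\<forall>m\<ge>N. s m = j" using jN0 N_def by auto
  have gjN: "\<forall>m\<ge>N. gen i s m = j" using jN N_def ge by auto
  have ev1: "evval s = j" by (rule evval_eq[OF jN])
  have ev2: "evval (gen i s) = j" by (rule evval_eq[OF gjN])
  show ?thesis
  proof (cases "j = 0")
    case False
    then show ?thesis unfolding labA_def ev1 ev2 by simp
  next
    case True
    then have z: "\<forall>m\<ge>N. s m = 0" using jN by simp
    obtain G where G: "G \<ge> k" "s G \<noteq> 0" "\<forall>m>G. s m = 0" using exists_last[OF k1 z] by blast
    have "lastnz (gen i s) = lastnz s"
    proof (cases "G > k")
      case True
      have "gen i s G = s G" using ge True by simp
      moreover have "\<forall>m>G. gen i s m = s m" using ge True by simp
      ultimately have "lastnz (gen i s) = s G" using lastnz_eq[of "gen i s" G] G by simp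
      then show ?thesis using lastnz_eq[of s G] G by simp
    next
      case False
      then have Gk: "G = k" using G(1) by simp
      show ?thesis
      proof (cases "s k = i")
        case True
        have "k \<noteq> 0"
        proof
          assume "k = 0"
          then have "gen i s = (\<lambda>_. 0)" using ge True G(3) Gk by (auto simp: fun_eq_iff)
          then show False using g PA_ne by metis
        qed
        then obtain k' where k': "k = Suc k'" by (metis not0_implies_Suc)
        have "gen i s k' = i" using ge k' by simp
        moreover have "\<forall>m>k'. gen i s m = 0" using ge k' G(3) Gk True by auto
        ultimately have "lastnz (gen i s) = i" using lastnz_eq[of "gen i s" k'] i by auto
        moreover have "lastnz s = i" using lastnz_eq[of s G] G Gk True by simp
        ultimately show ?thesis by simp
      next
        case False
        have "gen i s k = s k" using ge False by simp
        moreover have "\<forall>m>k. gen i s m = 0" using ge G(3) Gk by auto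
        ultimately have "lastnz (gen i s) = s k" using lastnz_eq[of "gen i s" k] k1 by auto
        then show ?thesis using lastnz_eq[of s G] G Gk by simp
      qed
    qed
    then show ?thesis unfolding labA_def ev1 ev2 by simp
  qed
qed

definition fA :: "nat \<times> nat \<Rightarrow> nat \<Rightarrow> word" where
  "fA l k = (if snd l = 0 then pre (Suc k) 0 (\<lambda>_. fst l) else pre k 0 (cns (snd l) (\<lambda>_. 0)))"

definition LA :: "nat \<Rightarrow> (nat \<times> nat) set" where
  "LA p = (\<lambda>i. (i,0)) ` {1..p} \<union> (\<lambda>i. (0,i)) ` {1..p}"

lemma card_LA: "card (LA p) = 2*p"
proof -
  have d: "(\<lambda>i. (i,0::nat)) ` {1..p} \<inter> (\<lambda>i. (0::nat,i)) ` {1..p} = {}" by auto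
  have c1: "card ((\<lambda>i. (i,0::nat)) ` {1..p}) = p" by (subst card_image) (auto intro: inj_onI)
  have c2: "card ((\<lambda>i. (0::nat,i)) ` {1..p}) = p" by (subst card_image) (auto intro: inj_onI)
  show ?thesis unfolding LA_def by (subst card_Un_disjoint) (use d c1 c2 in auto)
qed

lemma fA_props:
  assumes l: "l \<in> LA p"
  shows "inj (fA l)" "\<And>k. fA l k \<in> Aset p" "\<And>k. fA l k \<notin> PA p 0" "\<And>k. labA (fA l k) = l"
proof -
  consider (a) i where "i \<in> {1..p}" "l = (i,0)" | (b) i where "i \<in> {1..p}" "l = (0,i)"
    using l unfolding LA_def by blast
  then have all: "inj (fA l) \<and> (\<forall>k. fA l k \<in> Aset p \<and> fA l k \<notin> PA p 0 \<and> labA (fA l k) = l)"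
  proof cases
    case (a i)
    have fk: "fA l k = pre (Suc k) 0 (\<lambda>_. i)" for k using a by (simp add: fA_def)
    have v1: "fA l k (Suc k) = i" for k unfolding fk by (simp add: pre_def)
    have v2: "fA l k m = 0" if "m < Suc k" for k m unfolding fk using that by (simp add: pre_def)
    have inj: "inj (fA l)"
    proof (rule injI)
      fix k1 k2 assume e: "fA l k1 = fA l k2"
      show "k1 = k2"
      proof (rule ccontr)
        assume "k1 \<noteq> k2"
        then have "k1 < k2 \<or> k2 < k1" by arith
        then show False
        proof
          assume "k1 < k2"
          then have "fA l k2 (Suc k1) = 0" using v2 by simp
          then show False using e v1[of k1] a(1) by simp
        next
          assume "k2 < k1"
          then have "fA l k1 (Suc k2) = 0" using v2 by simp
          then show False using e v1[of k2] a(1) by simp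
        qed
      qed
    qed
    have rest: "fA l k \<in> Aset p \<and> fA l k \<notin> PA p 0 \<and> labA (fA l k) = l" for k
    proof -
      have t: "\<forall>m\<ge>Suc k. fA l k m = i" unfolding fk by (simp add: pre_def)
      have X: "fA l k \<in> Xinf p" unfolding fk using a(1) by (auto simp: pre_def Xinf_def)
      have A: "fA l k \<in> Aset p" using X t unfolding Aset_def evconst_def by blast
      have nP: "fA l k \<notin> PA p 0"
      proof
        assume "fA l k \<in> PA p 0"
        then have "fA l k (Suc k) = fA l k 0" by (rule PA_D) simp
        then show False using v1[of k] v2[of 0 k] a(1) by simp
      qed
      have "evval (fA l k) = i" by (rule evval_eq[OF t])
      then have "labA (fA l k) = l" using a by (simp add: labA_def)
      then show ?thesis using A nP by simp
    qed
    show ?thesis using inj rest by simp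
  next
    case (b i)
    have fk: "fA l k = pre k 0 (cns i (\<lambda>_. 0))" for k using b by (simp add: fA_def)
    have v1: "fA l k k = i" for k unfolding fk by (simp add: pre_def)
    have v2: "fA l k m = 0" if "m \<noteq> k" for k m unfolding fk using that
      by (auto simp: pre_def cns_def split: nat.split)
    have inj: "inj (fA l)"
    proof (rule injI)
      fix k1 k2 assume e: "fA l k1 = fA l k2"
      show "k1 = k2"
      proof (rule ccontr)
        assume ne: "k1 \<noteq> k2"
        have "fA l k2 k1 = 0" using v2 ne by simp
        then show False using e v1[of k1] b(1) by simp
      qed
    qed
    have rest: "fA l k \<in> Aset p \<and> fA l k \<notin> PA p 0 \<and> labA (fA l k) = l" for k
    proof -
      have t: "\<forall>m\<ge>Suc k. fA l k m = 0" using v2 by simp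
      have X: "fA l k \<in> Xinf p" unfolding fk using b(1) by (auto simp: pre_def Xinf_def cns_def split: nat.split)
      have A: "fA l k \<in> Aset p" using X t unfolding Aset_def evconst_def by blast
      have nP: "fA l k \<notin> PA p 0"
      proof
        assume "fA l k \<in> PA p 0"
        then have "fA l k (Suc k) = fA l k 0" "fA l k k = fA l k 0" by (rule PA_D, simp)+
        then show False using v1[of k] v2[of "Suc k" k] b(1) by simp
      qed
      have e0: "evval (fA l k) = 0" by (rule evval_eq[OF t])
      have "lastnz (fA l k) = i" using lastnz_eq[of "fA l k" k] v1 v2 b(1) by simp
      then have "labA (fA l k) = l" using b e0 by (simp add: labA_def)
      then show ?thesis using A nP by simp
    qed
    show ?thesis using inj rest by simp
  qed
  show "inj (fA l)" using all by simp
  show "\<And>k. fA l k \<in> Aset p" using all by simp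
  show "\<And>k. fA l k \<notin> PA p 0" using all by simp
  show "\<And>k. labA (fA l k) = l" using all by simp
qed

lemma lower_A:
  assumes "v \<in> Aset p"
  shows "enat (2*p) \<le> num_ends p v"
proof -
  have ov: "orbit p v = Aset p" using orbit_A'[OF assms] .
  have P: "PA p 0 \<subseteq> orbit p v" "finite (PA p 0)" "PA p 0 \<noteq> {}"
    using PA_sub[of p 0] ov PA_finite[of p 0] PA_ne[of p 0] by auto
  have "enat (card (LA p)) \<le> ecard (icomps p (orbit p v - PA p 0))"
  proof (rule labels_lower[where lab = labA and V = "\<lambda>l. range (fA l)", OF P])
    show "finite (LA p)" unfolding LA_def by simp
    fix x y assume xy: "(x,y) \<in> Restr (adj p) (orbit p v - PA p 0)"
    then have "(x,y) \<in> adj p" by simp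
    then obtain i where i: "i \<in> {1..p}" "y = gen i x \<or> x = gen i y" unfolding adj_iff by blast
    have xA: "x \<in> Aset p" "x \<notin> PA p 0" "y \<in> Aset p" "y \<notin> PA p 0" using xy ov by auto
    show "labA x = labA y"
    proof (cases "y = gen i x")
      case True then show ?thesis using labA_inv[OF i(1), of x] xA by simp
    next
      case False then have "x = gen i y" using i(2) by simp
      then show ?thesis using labA_inv[OF i(1), of y] xA by simp
    qed
  next
    fix l assume l: "l \<in> LA p"
    note f = fA_props[OF l]
    show "infinite (range (fA l)) \<and> range (fA l) \<subseteq> orbit p v - PA p 0 \<and> (\<forall>x\<in>range (fA l). labA x = l)"
      using f ov range_inj_infinite[OF f(1)] by auto
  qed
  then have "enat (2*p) \<le> ecard (icomps p (orbit p v - PA p 0))" using card_LA by simp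
  then show ?thesis by (rule num_ends_ge[OF P(2) P(1)])
qed

lemma ends_A: "v \<in> Aset p \<Longrightarrow> num_ends p v = enat (2*p)"
  using lower_A upper_A by (metis antisym)

definition Cofw :: "nat \<Rightarrow> word \<Rightarrow> word set" where
  "Cofw p v = {y \<in> Xinf p. \<exists>N. \<forall>m\<ge>N. y m = v m}"

lemma cofw_gen:
  assumes "\<forall>m\<ge>N. y m = v m" "\<not> evconst v"
  shows "\<exists>N'. \<forall>m\<ge>N'. gen i y m = v m"
proof -
  have "y \<noteq> (\<lambda>_. 0)"
  proof
    assume "y = (\<lambda>_. 0)"
    then have "\<forall>m\<ge>N. v m = 0" using assms(1) by auto
    then show False using assms(2) unfolding evconst_def by blast
  qed
  then obtain k where "\<forall>m>k. gen i y m = y m" using gen_cof by blast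
  then have "\<forall>m\<ge>max N (Suc k). gen i y m = v m" using assms(1) by auto
  then show ?thesis by blast
qed

lemma cofw_gen_rev:
  assumes "\<forall>m\<ge>N. gen i y m = v m" "\<not> evconst v"
  shows "\<exists>N'. \<forall>m\<ge>N'. y m = v m"
proof (cases "y = (\<lambda>_. 0)")
  case True
  then have "\<forall>m\<ge>N. v m = i" using assms(1) by (simp add: gen_zero)
  then show ?thesis using assms(2) unfolding evconst_def by blast
next
  case False
  then obtain k where "\<forall>m>k. gen i y m = y m" using gen_cof by blast
  then have "\<forall>m\<ge>max N (Suc k). y m = v m" using assms(1) by auto
  then show ?thesis by blast
qed

lemma orbit_cofw:
  assumes "v \<in> Xinf p" "\<not> evconst v"
  shows "orbit p v \<subseteq> Cofw p v"
proof
  fix w assume "w \<in> orbit p v"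
  then have "(v,w) \<in> (adj p)\<^sup>*" by (simp add: orbit_def)
  then show "w \<in> Cofw p v"
  proof induction
    case base then show ?case using assms(1) by (auto simp: Cofw_def)
  next
    case (step y z)
    obtain i where i: "i \<in> {1..p}" "z = gen i y \<or> y = gen i z" using step.hyps(2) unfolding adj_iff by blast
    have zX: "z \<in> Xinf p" using adj_Xinf step by (auto simp: Cofw_def)
    obtain N where N: "\<forall>m\<ge>N. y m = v m" using step.IH by (auto simp: Cofw_def)
    have "\<exists>N'. \<forall>m\<ge>N'. z m = v m"
    proof (cases "z = gen i y")
      case True then show ?thesis using cofw_gen[OF N assms(2)] by simp
    next
      case False then have "y = gen i z" using i(2) by simp
      then show ?thesis using cofw_gen_rev[of N i z v] N assms(2) by simp
    qed
    then show ?case using zX by (simp add: Cofw_def)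
  qed
qed

lemma F_bound:
  assumes "finite F" "F \<subseteq> Cofw p v"
  shows "\<exists>N0. \<forall>y\<in>F. \<forall>m\<ge>N0. y m = v m"
proof -
  have "\<forall>y\<in>F. \<exists>N. \<forall>m\<ge>N. y m = v m" using assms(2) by (auto simp: Cofw_def)
  then obtain f where f: "\<forall>y\<in>F. \<forall>m\<ge>f y. y m = v m" by metis
  define N where "N = (\<Sum>y\<in>F. f y)"
  have "\<forall>y\<in>F. f y \<le> N" unfolding N_def using assms(1) by (simp add: member_le_sum)
  then show ?thesis using f by (metis le_trans)
qed

lemma shn_Suc: "shn n v = cns (v n) (shn (Suc n) v)"
  by (rule ext) (auto simp: shn_def cns_def split: nat.split)

lemma pre_shn_agree: "m \<ge> n \<Longrightarrow> pre n a (shn n v) m = v m"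
  by (simp add: pre_def shn_def)

lemma exits_BC:
  assumes v: "v \<in> Xinf p" and x: "v n = x" "x \<noteq> 0"
  defines "w \<equiv> shn (Suc n) v"
  shows "exits p v (piece p n v) \<subseteq> {pre n x (cns 0 w)} \<union> {pre n 0 (cns 0 S) | S. gen x S = w}"
proof
  fix e assume e: "e \<in> exits p v (piece p n v)"
  then obtain y where y: "y \<in> piece p n v" "(e,y) \<in> adj p" and eo: "e \<in> orbit p v" "e \<notin> piece p n v"
    unfolding exits_def by auto
  have eX: "e \<in> Xinf p" using eo orbit_Xinf[OF v] by auto
  have T: "shn n v = cns x w" unfolding w_def using shn_Suc[of n v] x by simp
  have shy: "shn n y = shn n v" using y(1) by (auto simp: piece_def shn_def)
  have notP: False if "\<And>m. m \<ge> n \<Longrightarrow> e m = v m"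
    using eo(2) eX that unfolding piece_def by auto
  obtain i where i: "i \<in> {1..p}" "y = gen i e \<or> e = gen i y" using y(2) unfolding adj_iff by blast
  show "e \<in> {pre n x (cns 0 w)} \<union> {pre n 0 (cns 0 S) | S. gen x S = w}"
  proof (cases "e = gen i y")
    case True
    show ?thesis
    proof (cases "\<exists>m<n. y m \<noteq> 0")
      case True2: True
      have "e m = v m" if "m \<ge> n" for m
        using gen_G1[OF True2 that, of i] True y(1) that by (auto simp: piece_def)
      then show ?thesis using notP by blast
    next
      case False
      then have "y = pre n 0 (shn n y)" using zero_pre by auto
      then have ee: "e = pre n i (gen i (cns x w))" using True shy T gen_pre0 by metis
      show ?thesis
      proof (cases "i = x")
        case True
        then have "e = pre n x (cns 0 w)" using ee x(2) by (simp add: gen_cns)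
        then show ?thesis by simp
      next
        case False
        then have "e = pre n i (shn n v)" using ee x(2) T by (simp add: gen_cns)
        then have "e m = v m" if "m \<ge> n" for m using pre_shn_agree that by simp
        then show ?thesis using notP by blast
      qed
    qed
  next
    case False
    then have yi: "y = gen i e" using i(2) by simp
    show ?thesis
    proof (cases "\<exists>m<n. e m \<noteq> 0")
      case True
      have "e m = v m" if "m \<ge> n" for m
        using gen_G1[OF True that, of i] yi y(1) that by (auto simp: piece_def)
      then show ?thesis using notP by blast
    next
      case False
      then have ez: "e = pre n 0 (shn n e)" using zero_pre by auto
      then have "y = pre n i (gen i (shn n e))" using yi gen_pre0 by metis
      then have g: "gen i (shn n e) = cns x w" using shy T by (metis shn_pre)
      obtain s0 S where S: "shn n e = cns s0 S" by (metis cns_sh)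
      have i0: "i \<noteq> 0" using i(1) by auto
      note c = gen_cns_cases[OF g[unfolded S] i0]
      show ?thesis
      proof (cases "s0 = 0")
        case True
        then have "x = i" "w = gen i S" using c i0 by auto
        then have "e = pre n 0 (cns 0 S)" "gen x S = w" using ez S True by auto
        then show ?thesis by blast
      next
        case False
        then have "S = w" "s0 = x" using c x(2) by auto
        then have "e = pre n 0 (shn n v)" using ez S T by simp
        then have "e m = v m" if "m \<ge> n" for m using pre_shn_agree that by simp
        then show ?thesis using notP by blast
      qed
    qed
  qed
qed

lemma card_exits_BC:
  assumes v: "v \<in> Xinf p" and x: "v n = x" "x \<in> {1..p}"
  shows "card (exits p v (piece p n v)) \<le> 2"
proof -
  define w where "w = shn (Suc n) v"
  have x0: "x \<noteq> 0" using x by auto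
  have "{pre n 0 (cns 0 S) | S. gen x S = w} \<subseteq> {pre n 0 (cns 0 (SOME S. gen x S = w))}"
  proof
    fix e assume "e \<in> {pre n 0 (cns 0 S) | S. gen x S = w}"
    then obtain S where S: "e = pre n 0 (cns 0 S)" "gen x S = w" by blast
    have "gen x (SOME S. gen x S = w) = w" by (rule someI[of "\<lambda>S. gen x S = w", OF S(2)])
    then have "(SOME S. gen x S = w) = S" using S(2) gen_inj[OF x0, of "SOME S. gen x S = w" S] by simp
    then show "e \<in> {pre n 0 (cns 0 (SOME S. gen x S = w))}" using S by simp
  qed
  then have "exits p v (piece p n v) \<subseteq> {pre n x (cns 0 w), pre n 0 (cns 0 (SOME S. gen x S = w))}"
    using exits_BC[OF v x(1) x0] unfolding w_def by blast
  then have "card (exits p v (piece p n v)) \<le> card {pre n x (cns 0 w), pre n 0 (cns 0 (SOME S. gen x S = w))}"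
    by (rule card_mono[rotated]) simp
  also have "\<dots> \<le> 2" by (simp add: card_insert_le_m1)
  finally show ?thesis .
qed

lemma upper_piece:
  assumes v: "v \<in> Xinf p" "\<not> evconst v" and F: "finite F" "F \<subseteq> orbit p v"
    and n: "\<exists>N0. \<forall>y\<in>F. \<forall>m\<ge>N0. y m = v m \<Longrightarrow> True"
  shows "\<exists>N0. F \<subseteq> piece p N0 v \<and> (\<forall>n\<ge>N0. F \<subseteq> piece p n v)"
proof -
  obtain N0 where N0: "\<forall>y\<in>F. \<forall>m\<ge>N0. y m = v m"
    using F_bound[OF F(1)] F(2) orbit_cofw[OF v] by blast
  have "\<forall>n\<ge>N0. F \<subseteq> piece p n v"
    using N0 F(2) orbit_Xinf[OF v(1)] unfolding piece_def by auto
  then show ?thesis by auto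
qed

definition evpair :: "nat \<Rightarrow> word \<Rightarrow> bool" where
  "evpair x v \<longleftrightarrow> (\<exists>N. \<forall>m\<ge>N. v m \<in> {0,x})"

definition clsB :: "nat \<Rightarrow> word \<Rightarrow> bool" where
  "clsB p v \<longleftrightarrow> \<not> evconst v \<and> (\<exists>x\<in>{1..p}. evpair x v)"

definition clsC :: "nat \<Rightarrow> word \<Rightarrow> bool" where
  "clsC p v \<longleftrightarrow> \<not> evconst v \<and> \<not> (\<exists>x\<in>{1..p}. evpair x v)"

lemma nonzero_after: "\<not> evconst v \<Longrightarrow> \<exists>n\<ge>M. v n \<noteq> 0"
  unfolding evconst_def by blast

lemma piece_props: "v \<in> Xinf p \<Longrightarrow> piece p n v \<subseteq> orbit p v \<and> finite (piece p n v) \<and> piece p n v \<noteq> {}"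
  using piece_orbit piece_finite piece_self by blast

lemma upper_B:
  assumes v: "v \<in> Xinf p" and B: "clsB p v"
  shows "num_ends p v \<le> 2"
proof (rule num_ends_le)
  fix F assume F: "finite F" "F \<subseteq> orbit p v"
  have ne: "\<not> evconst v" using B by (simp add: clsB_def)
  obtain x N1 where x: "x \<in> {1..p}" "\<forall>m\<ge>N1. v m \<in> {0,x}" using B by (auto simp: clsB_def evpair_def)
  obtain N0 where N0: "\<forall>n\<ge>N0. F \<subseteq> piece p n v" using upper_piece[OF v ne F] by blast
  obtain n where n: "n \<ge> max N0 N1" "v n \<noteq> 0" using nonzero_after[OF ne] by blast
  have vn: "v n = x" using x(2) n by auto
  have "ecard (icomps p (orbit p v - F)) \<le> enat (card (exits p v (piece p n v)))"
    by (rule cnt_le_exits) (use N0 n piece_props[OF v] in auto)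
  also have "\<dots> \<le> 2" using card_exits_BC[OF v vn x(1)] by (simp add: numeral_eq_enat)
  finally show "ecard (icomps p (orbit p v - F)) \<le> 2" .
qed

lemma funpow_fix: "f a = a \<Longrightarrow> (f ^^ k) a = a"
  by (induction k) auto

lemma gen2_cns: "c \<in> {0,x} \<Longrightarrow> x \<noteq> 0 \<Longrightarrow> gen x (gen x (cns c u)) = cns c (gen x u)"
  by (auto simp: gen_cns)

lemma genpow_cns: "c \<in> {0,x} \<Longrightarrow> x \<noteq> 0 \<Longrightarrow> (gen x ^^ (2*k)) (cns c u) = cns c ((gen x ^^ k) u)"
proof (induction k)
  case 0 then show ?case by simp
next
  case (Suc k)
  have e: "2 * Suc k = 2 + 2*k" by simp
  have "(gen x ^^ (2 * Suc k)) (cns c u) = (gen x ^^ 2) ((gen x ^^ (2*k)) (cns c u))"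
    unfolding e funpow_add by simp
  also have "\<dots> = gen x (gen x ((gen x ^^ (2*k)) (cns c u)))" by (simp add: numeral_2_eq_2)
  finally have "(gen x ^^ (2 * Suc k)) (cns c u) = gen x (gen x ((gen x ^^ (2*k)) (cns c u)))" .
  also have "\<dots> = cns c (gen x ((gen x ^^ k) u))" using Suc gen2_cns by simp
  finally show ?case by simp
qed

lemma period: "x \<noteq> 0 \<Longrightarrow> w d \<notin> {0,x} \<Longrightarrow> (gen x ^^ (2^d)) w = w"
proof (induction d arbitrary: w)
  case 0
  have "gen x w = w" using 0 gen_cns[of x "w 0" "sh w"] by (simp add: cns_sh)
  then show ?case by simp
next
  case (Suc d)
  obtain c u where w: "w = cns c u" by (metis cns_sh)
  have ud: "u d \<notin> {0,x}" using Suc.prems w by simp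
  show ?case
  proof (cases "c \<in> {0,x}")
    case True
    have "(gen x ^^ (2^Suc d)) w = (gen x ^^ (2*2^d)) (cns c u)" using w by simp
    also have "\<dots> = cns c ((gen x ^^ (2^d)) u)" by (rule genpow_cns[OF True Suc.prems(1)])
    also have "\<dots> = w" using Suc.IH[of u, OF Suc.prems(1) ud] w by simp
    finally show ?thesis .
  next
    case False
    then have "gen x w = w" using w gen_cns[of x c u] by auto
    then show ?thesis by (rule funpow_fix)
  qed
qed

lemma pre_Xinf: "a \<le> p \<Longrightarrow> T \<in> Xinf p \<Longrightarrow> pre n a T \<in> Xinf p"
  by (simp add: pre_def Xinf_def)
lemma shn_Xinf: "v \<in> Xinf p \<Longrightarrow> shn n v \<in> Xinf p" by (simp add: shn_def Xinf_def)
lemma genpow_Xinf: "w \<in> Xinf p \<Longrightarrow> x \<le> p \<Longrightarrow> (gen x ^^ k) w \<in> Xinf p"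
  by (induction k) (auto intro: gen_Xinf)

lemma C_path:
  assumes v: "v \<in> Xinf p" and x: "v n = x" "x \<in> {1..p}"
    and L: "0 < L" "(gen x ^^ L) (shn (Suc n) v) = shn (Suc n) v"
    and Lmin: "\<And>k. 0 < k \<Longrightarrow> k < L \<Longrightarrow> (gen x ^^ k) (shn (Suc n) v) \<noteq> shn (Suc n) v"
  shows "k < L \<Longrightarrow> (pre n x (cns 0 (shn (Suc n) v)), pre (Suc n) 0 ((gen x ^^ k) (shn (Suc n) v)))
           \<in> (Restr (adj p) (Xinf p - piece p n v))\<^sup>*"
proof (induction k)
  define w where "w = shn (Suc n) v"
  have wX: "w \<in> Xinf p" unfolding w_def by (rule shn_Xinf[OF v])
  have xp: "x \<le> p" "x \<noteq> 0" using x by auto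
  case 0
  define t where "t = pre (Suc n) 0 w"
  have tX: "t \<in> Xinf p" unfolding t_def by (rule pre_Xinf[OF _ wX]) simp
  have e1X: "pre n x (cns 0 w) \<in> Xinf p" by (rule pre_Xinf[OF xp(1) cns_Xinf[OF wX]]) simp
  have ag: "\<forall>m\<ge>n. pre n x (cns 0 w) m = t m"
    unfolding t_def pre_Suc' by (simp add: pre_def)
  have "(t, pre n x (cns 0 w)) \<in> (Restr (adj p) (piece p n t))\<^sup>*" by (rule PC[OF tX e1X ag])
  moreover have "piece p n t \<subseteq> Xinf p - piece p n v"
  proof
    fix z assume z: "z \<in> piece p n t"
    have "z n = t n" using z by (simp add: piece_def)
    also have "t n = 0" unfolding t_def by (simp add: pre_def)
    finally have "z n \<noteq> v n" using x xp by simp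
    then show "z \<in> Xinf p - piece p n v" using z by (auto simp: piece_def)
  qed
  ultimately have "(t, pre n x (cns 0 w)) \<in> (Restr (adj p) (Xinf p - piece p n v))\<^sup>*" by (rule rt_mono[rotated])
  then show ?case using rt_sym unfolding t_def w_def by simp
next
  case (Suc k)
  define w where "w = shn (Suc n) v"
  have wX: "w \<in> Xinf p" unfolding w_def by (rule shn_Xinf[OF v])
  have xp: "x \<le> p" "x \<noteq> 0" using x by auto
  define a where "a = pre (Suc n) 0 ((gen x ^^ k) w)"
  define b where "b = pre (Suc n) x ((gen x ^^ Suc k) w)"
  define c where "c = pre (Suc n) 0 ((gen x ^^ Suc k) w)"
  have neq: "(gen x ^^ Suc k) w \<noteq> w" using Lmin[of "Suc k"] Suc.prems unfolding w_def by simp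
  have IH: "(pre n x (cns 0 w), a) \<in> (Restr (adj p) (Xinf p - piece p n v))\<^sup>*"
    using Suc.IH Suc.prems unfolding a_def w_def by simp
  have ab: "b = gen x a" unfolding a_def b_def by (simp add: gen_pre0)
  have aX: "a \<in> Xinf p" unfolding a_def by (rule pre_Xinf[OF _ genpow_Xinf[OF wX xp(1)]]) simp
  have bX: "b \<in> Xinf p" unfolding b_def by (rule pre_Xinf[OF xp(1) genpow_Xinf[OF wX xp(1)]])
  have cX: "c \<in> Xinf p" unfolding c_def by (rule pre_Xinf[OF _ genpow_Xinf[OF wX xp(1)]]) simp
  have anP: "a \<notin> piece p n v"
  proof
    assume "a \<in> piece p n v"
    then have "a n = v n" by (simp add: piece_def)
    then show False unfolding a_def using x xp by (simp add: pre_def)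
  qed
  have tailP: "z \<notin> piece p n v" if "shn (Suc n) z = (gen x ^^ Suc k) w" for z
  proof
    assume "z \<in> piece p n v"
    then have "shn (Suc n) z = w" unfolding w_def by (auto simp: piece_def shn_def)
    then show False using that neq by simp
  qed
  have bnP: "b \<notin> piece p n v" by (rule tailP) (simp add: b_def)
  have step1: "(a, b) \<in> Restr (adj p) (Xinf p - piece p n v)"
    using adj_gen[OF x(2), of a] ab aX bX anP bnP by simp
  have ag: "\<forall>m\<ge>Suc n. c m = b m" unfolding b_def c_def by (simp add: pre_def)
  have "(b, c) \<in> (Restr (adj p) (piece p (Suc n) b))\<^sup>*" by (rule PC[OF bX cX ag])
  moreover have "piece p (Suc n) b \<subseteq> Xinf p - piece p n v"
  proof
    fix z assume z: "z \<in> piece p (Suc n) b"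
    have "shn (Suc n) z = shn (Suc n) b" using z by (auto simp: piece_def shn_def)
    also have "\<dots> = (gen x ^^ Suc k) w" unfolding b_def by simp
    finally have "z \<notin> piece p n v" by (rule tailP)
    then show "z \<in> Xinf p - piece p n v" using z by (auto simp: piece_def)
  qed
  ultimately have "(b, c) \<in> (Restr (adj p) (Xinf p - piece p n v))\<^sup>*" by (rule rt_mono[rotated])
  then have "(pre n x (cns 0 w), c) \<in> (Restr (adj p) (Xinf p - piece p n v))\<^sup>*"
    using IH step1 by (meson converse_rtrancl_into_rtrancl rtrancl_trans r_into_rtrancl)
  then show ?case unfolding c_def w_def .
qed

lemma upper_C:
  assumes v: "v \<in> Xinf p" and C: "clsC p v"
  shows "num_ends p v \<le> 1"
proof (rule num_ends_le)
  fix F assume F: "finite F" "F \<subseteq> orbit p v"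
  have ne: "\<not> evconst v" using C by (simp add: clsC_def)
  obtain N0 where N0: "\<forall>n\<ge>N0. F \<subseteq> piece p n v" using upper_piece[OF v ne F] by blast
  obtain n where n: "n \<ge> N0" "v n \<noteq> 0" using nonzero_after[OF ne] by blast
  define x where "x = v n"
  have x: "x \<in> {1..p}" "x \<noteq> 0" "x \<le> p" using n v unfolding x_def by (auto simp: Xinf_def)
  define w where "w = shn (Suc n) v"
  have "\<not> evpair x v" using C x by (auto simp: clsC_def)
  then obtain m where m: "m \<ge> Suc n" "v m \<notin> {0,x}" unfolding evpair_def by blast
  define d where "d = m - Suc n"
  have wd: "w d \<notin> {0,x}" using m unfolding w_def d_def shn_def by simp
  have per: "(gen x ^^ (2^d)) w = w" by (rule period[of x w d, OF x(2) wd])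
  define L where "L = (LEAST l. 0 < l \<and> (gen x ^^ l) w = w)"
  have ex: "\<exists>l. 0 < l \<and> (gen x ^^ l) w = w" using per by (intro exI[of _ "2^d"]) simp
  have L1: "0 < L \<and> (gen x ^^ L) w = w" using LeastI_ex[OF ex] unfolding L_def .
  have Lmin: "(gen x ^^ k) w \<noteq> w" if "0 < k" "k < L" for k
    using not_less_Least[of k "\<lambda>l. 0 < l \<and> (gen x ^^ l) w = w"] that unfolding L_def by auto
  define ex1 where "ex1 = pre n x (cns 0 w)"
  have T: "shn n v = cns x w" unfolding w_def x_def by (rule shn_Suc)
  have y0: "pre n 0 (shn n v) \<in> orbit p v"
  proof -
    have "pre n 0 (shn n v) \<in> piece p n v"
      using pre_Xinf[OF _ shn_Xinf[OF v]] pre_shn_agree by (auto simp: piece_def)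
    then show ?thesis using piece_orbit[OF v] by auto
  qed
  have "gen x (pre n 0 (shn n v)) = ex1" unfolding ex1_def T gen_pre0 using x(2) by (simp add: gen_cns)
  then have ex1o: "ex1 \<in> orbit p v" using orbit_adj[OF y0 adj_gen[OF x(1)]] by simp
  have paths: "\<forall>e\<in>exits p v (piece p n v). (ex1, e) \<in> (Restr (adj p) (orbit p v - piece p n v))\<^sup>*"
  proof
    fix e assume e: "e \<in> exits p v (piece p n v)"
    have "e = ex1 \<or> (\<exists>S. e = pre n 0 (cns 0 S) \<and> gen x S = w)"
      using exits_BC[OF v x_def[symmetric] x(2)] e unfolding ex1_def w_def by blast
    then show "(ex1, e) \<in> (Restr (adj p) (orbit p v - piece p n v))\<^sup>*"
    proof
      assume "e = ex1" then show ?thesis by simp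
    next
      assume "\<exists>S. e = pre n 0 (cns 0 S) \<and> gen x S = w"
      then obtain S where S: "e = pre n 0 (cns 0 S)" "gen x S = w" by blast
      have "gen x ((gen x ^^ (L - 1)) w) = (gen x ^^ L) w"
        using L1 by (metis Suc_diff_1 funpow.simps(2) o_apply)
      then have "gen x ((gen x ^^ (L - 1)) w) = gen x S" using L1 S(2) by simp
      then have SL: "S = (gen x ^^ (L - 1)) w" using gen_inj[OF x(2)] by metis
      have eL: "e = pre (Suc n) 0 ((gen x ^^ (L - 1)) w)" using S(1) SL by (simp add: pre_Suc')
      have "(ex1, e) \<in> (Restr (adj p) (Xinf p - piece p n v))\<^sup>*"
        unfolding ex1_def eL w_def
        by (rule C_path[OF v x_def[symmetric] x(1)]) (use L1 Lmin in \<open>auto simp: w_def\<close>)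
      then have "(ex1, e) \<in> (Restr (adj p) ((Xinf p - piece p n v) \<inter> orbit p v))\<^sup>*"
        by (rule rt_Restr_orbit[OF _ ex1o])
      moreover have "(Xinf p - piece p n v) \<inter> orbit p v = orbit p v - piece p n v"
        using orbit_Xinf[OF v] by auto
      ultimately show ?thesis by simp
    qed
  qed
  show "ecard (icomps p (orbit p v - F)) \<le> 1"
    by (rule cnt_le_one[OF _ _ _ _ paths]) (use N0 n piece_props[OF v] in auto)
qed

lemma comp_orbit: "comp p (orbit p v) v = orbit p v"
proof
  show "comp p (orbit p v) v \<subseteq> orbit p v" using comp_mem orbit_refl by blast
  show "orbit p v \<subseteq> comp p (orbit p v) v"
  proof
    fix z assume "z \<in> orbit p v"
    then have "(v,z) \<in> (Restr (adj p) UNIV)\<^sup>*" by (simp add: orbit_def)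
    then have "(v,z) \<in> (Restr (adj p) (UNIV \<inter> orbit p v))\<^sup>*" by (rule rt_Restr_orbit[OF _ orbit_refl])
    then show "z \<in> comp p (orbit p v) v" by (simp add: comp_def)
  qed
qed

lemma orbit_infinite:
  assumes v: "v \<in> Xinf p" and p: "p \<ge> 1"
  shows "infinite (orbit p v)"
proof -
  define f where "f m = v(m := (if v m = 0 then 1 else 0))" for m
  have fo: "f m \<in> orbit p v" for m
  proof -
    have "f m \<in> piece p (Suc m) v" using v p unfolding f_def piece_def Xinf_def by auto
    then show ?thesis using piece_orbit[OF v] by auto
  qed
  have "inj f"
  proof (rule injI)
    fix a b assume e: "f a = f b"
    show "a = b"
    proof (rule ccontr)
      assume "a \<noteq> b"
      then have "f b a = v a" unfolding f_def by simp
      moreover have "f a a \<noteq> v a" unfolding f_def by simp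
      ultimately show False using e by simp
    qed
  qed
  then have "infinite (range f)" by (rule range_inj_infinite)
  moreover have "range f \<subseteq> orbit p v" using fo by auto
  ultimately show ?thesis using finite_subset by blast
qed

lemma lower_one:
  assumes v: "v \<in> Xinf p" and p: "p \<ge> 1"
  shows "1 \<le> num_ends p v"
proof -
  have "orbit p v \<in> icomps p (orbit p v - {})"
    unfolding icomps_def using comp_orbit[of p v] orbit_infinite[OF v p] orbit_refl[of v p] by auto
  then have "enat (card {orbit p v}) \<le> ecard (icomps p (orbit p v - {}))" by (intro ecard_ge) auto
  then have "1 \<le> ecard (icomps p (orbit p v - {}))" by (simp add: one_enat_def)
  then show ?thesis using num_ends_ge[of "{}" p v 1] by simp
qed

lemma ends_C: "v \<in> Xinf p \<Longrightarrow> p \<ge> 1 \<Longrightarrow> clsC p v \<Longrightarrow> num_ends p v = 1"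
  using upper_C lower_one by (metis antisym)

definition pr :: "nat \<Rightarrow> word \<Rightarrow> nat \<Rightarrow> bool" where
  "pr x s q \<longleftrightarrow> (\<forall>m\<ge>q. s m \<in> {0,x}) \<and> (q = 0 \<or> s q = x)"
definition qq :: "nat \<Rightarrow> word \<Rightarrow> nat" where "qq x s = (LEAST q. pr x s q)"
definition att :: "nat \<Rightarrow> word \<Rightarrow> word" where "att x s = (\<lambda>m. if m < qq x s then 0 else s m)"
definition topd :: "word \<Rightarrow> word \<Rightarrow> nat \<Rightarrow> bool" where
  "topd a b G \<longleftrightarrow> a G \<noteq> b G \<and> (\<forall>m>G. a m = b m)"
definition pos :: "nat \<Rightarrow> word \<Rightarrow> word \<Rightarrow> bool" where
  "pos x t0 s \<longleftrightarrow> (\<exists>G. topd (att x s) t0 G \<and> att x s G = 0)"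

lemma topd_unique: "topd a b G \<Longrightarrow> topd a b G' \<Longrightarrow> G = G'"
  unfolding topd_def by (metis linorder_neqE_nat)

lemma topd_exists:
  fixes a b :: word
  assumes "a \<noteq> b" "\<forall>m\<ge>N. a m = b m"
  shows "\<exists>G. topd a b G"
proof -
  define S where "S = {m. a m \<noteq> b m}"
  have "S \<subseteq> {..<N}"
  proof
    fix m assume "m \<in> S"
    then have "a m \<noteq> b m" by (simp add: S_def)
    have "\<not> N \<le> m"
    proof
      assume "N \<le> m" then have "a m = b m" using assms(2) by simp
      then show False using \<open>a m \<noteq> b m\<close> by simp
    qed
    then show "m \<in> {..<N}" by simp
  qed
  then have fS: "finite S" using finite_subset by blast
  have "S \<noteq> {}" using assms(1) unfolding S_def by auto
  define G where "G = Max S"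
  have "G \<in> S" using fS \<open>S \<noteq> {}\<close> unfolding G_def by simp
  moreover have "\<forall>m>G. a m = b m"
  proof (intro allI impI)
    fix m assume "m > G"
    then have "m \<notin> S" using fS unfolding G_def by (metis Max_ge not_le)
    then show "a m = b m" by (simp add: S_def)
  qed
  ultimately show ?thesis unfolding topd_def S_def by auto
qed

lemma pos_iff: "topd (att x s) t0 G \<Longrightarrow> pos x t0 s \<longleftrightarrow> att x s G = 0"
  unfolding pos_def using topd_unique by blast

lemma qq_props: "\<exists>q. pr x s q \<Longrightarrow> pr x s (qq x s) \<and> (\<forall>q<qq x s. \<not> pr x s q)"
proof -
  assume ex: "\<exists>q. pr x s q"
  have "pr x s (qq x s)" unfolding qq_def using LeastI_ex[OF ex] .
  moreover have "\<forall>q<qq x s. \<not> pr x s q"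
    using not_less_Least[of _ "pr x s"] unfolding qq_def by blast
  ultimately show ?thesis by blast
qed

lemma att_L: "\<exists>q. pr x s q \<Longrightarrow> att x s m \<in> {0,x}"
proof -
  assume ex: "\<exists>q. pr x s q"
  have "pr x s (qq x s)" using qq_props[OF ex] by blast
  then show ?thesis unfolding att_def pr_def by (cases "m < qq x s") auto
qed

lemma att_id: "\<forall>m. s m \<in> {0,x} \<Longrightarrow> att x s = s"
proof -
  assume a: "\<forall>m. s m \<in> {0,x}"
  have "pr x s 0" using a by (simp add: pr_def)
  then have "qq x s = 0" unfolding qq_def by (metis Least_eq_0)
  then show ?thesis by (simp add: att_def)
qed

lemma PL:
  assumes ag: "\<forall>m>K. a m = b m" and na: "\<forall>q\<le>K. \<not> pr x a q" and nb: "\<forall>q\<le>K. \<not> pr x b q"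
    and ex: "\<exists>q. pr x a q"
  shows "att x a = att x b"
proof -
  have eq: "pr x a = pr x b"
  proof (rule ext)
    fix q show "pr x a q = pr x b q"
    proof (cases "q \<le> K")
      case True then show ?thesis using na nb by simp
    next
      case False
      then have "\<forall>m\<ge>q. a m = b m" using ag by simp
      then show ?thesis unfolding pr_def by simp
    qed
  qed
  then have qe: "qq x a = qq x b" unfolding qq_def by simp
  have "pr x a (qq x a)" using qq_props[OF ex] by blast
  then have qK: "\<not> qq x a \<le> K" using na by blast
  show ?thesis
  proof (rule ext)
    fix m
    show "att x a m = att x b m"
    proof (cases "m < qq x a")
      case True then show ?thesis using qe by (simp add: att_def)
    next
      case False
      then have "m > K" using qK by simp
      then show ?thesis using qe ag False by (simp add: att_def)
    qed
  qed
qed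

lemma dich:
  assumes x0: "x \<noteq> 0" and i0: "i \<noteq> 0" and ex: "\<exists>q. pr x s q"
    and k1: "s k \<noteq> 0" and k2: "\<forall>m<k. s m = 0"
  shows "att x (gen i s) = att x s \<or> ((\<forall>m. s m \<in> {0,x}) \<and> i = x)"
proof -
  have ge: "gen i s = (\<lambda>m. if m < k then i else if m = k \<and> s k = i then 0 else s m)"
    by (rule gen_explicit[OF k1 k2])
  show ?thesis
  proof (cases "\<exists>j>k. s j \<notin> {0,x}")
    case True
    then obtain j where j: "j > k" "s j \<notin> {0,x}" by blast
    have "att x s = att x (gen i s)"
    proof (rule PL[where K = k])
      show "\<forall>m>k. s m = gen i s m" using ge by simp
      show "\<forall>q\<le>k. \<not> pr x s q" using j unfolding pr_def by (meson less_imp_le order_trans)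
      have "gen i s j = s j" using ge j by simp
      then show "\<forall>q\<le>k. \<not> pr x (gen i s) q" using j unfolding pr_def by (metis less_imp_le order_trans)
      show "\<exists>q. pr x s q" by (rule ex)
    qed
    then show ?thesis by simp
  next
    case False
    then have good: "\<forall>j>k. s j \<in> {0,x}" by blast
    show ?thesis
    proof (cases "s k = x")
      case True
      have allL: "\<forall>m. s m \<in> {0,x}"
      proof
        fix m show "s m \<in> {0,x}" using good k2 True by (cases "m < k"; cases "m = k") auto
      qed
      show ?thesis
      proof (cases "i = x")
        case True then show ?thesis using allL by simp
      next
        case ix: False
        have ge2: "gen i s = (\<lambda>m. if m < k then i else s m)" using ge True ix by auto
        show ?thesis
        proof (cases "k = 0")
          case True then have "gen i s = s" using ge2 by simp
          then show ?thesis by simp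
        next
          case knz: False
          have pk: "pr x (gen i s) k" using ge2 allL True unfolding pr_def by auto
          have "qq x (gen i s) = k"
            unfolding qq_def
          proof (rule Least_equality)
            show "pr x (gen i s) k" by (rule pk)
            fix q assume q: "pr x (gen i s) q"
            show "k \<le> q"
            proof (rule ccontr)
              assume "\<not> k \<le> q"
              then have "k - 1 \<ge> q" "k - 1 < k" by auto
              then have "gen i s (k - 1) \<in> {0,x}" using q unfolding pr_def by blast
              moreover have "gen i s (k - 1) = i" using ge2 \<open>k - 1 < k\<close> by simp
              ultimately show False using i0 ix by simp
            qed
          qed
          then have "att x (gen i s) = s" unfolding att_def using ge2 k2 by auto
          then show ?thesis using att_id[OF allL] by simp
        qed
      qed
    next
      case skx: False
      then have bad: "s k \<notin> {0,x}" using k1 by simp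
      show ?thesis
      proof (cases "s k = i \<and> k = 0")
        case True
        have gz: "gen i s = (\<lambda>m. if m = 0 then 0 else s m)" using ge True by auto
        have gL: "\<forall>m. gen i s m \<in> {0,x}" using gz good True by auto
        have p0: "\<not> pr x s 0" using bad True unfolding pr_def by auto
        note qp = qq_props[OF ex]
        have "att x s = gen i s"
        proof (rule ext)
          fix m show "att x s m = gen i s m"
          proof (cases "m = 0")
            case True
            have "qq x s \<noteq> 0"
            proof
              assume q0: "qq x s = 0"
              have "pr x s (qq x s)" using qp by blast
              then show False using q0 p0 by simp
            qed
            then show ?thesis using True gz by (simp add: att_def)
          next
            case m0: False
            show ?thesis
            proof (cases "m < qq x s")
              case True
              have "s m \<noteq> x"
              proof
                assume "s m = x"
                then have "pr x s m" using good m0 True unfolding pr_def \<open>s k = i \<and> k = 0\<close>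
                  by (metis True(1) bot_nat_0.not_eq_extremum dual_order.strict_trans1 \<open>s k = i \<and> k = 0\<close> gr0I)
                then show False using qp True by blast
              qed
              then have "s m = 0" using good m0 \<open>s k = i \<and> k = 0\<close> by auto
              then show ?thesis using True gz m0 by (simp add: att_def)
            next
              case False then show ?thesis using gz m0 by (simp add: att_def)
            qed
          qed
        qed
        then show ?thesis using att_id[OF gL] by simp
      next
        case False
        have "att x s = att x (gen i s)"
        proof (rule PL[where K = k])
          show "\<forall>m>k. s m = gen i s m" using ge by simp
          show "\<forall>q\<le>k. \<not> pr x s q" using bad unfolding pr_def by blast
          show "\<forall>q\<le>k. \<not> pr x (gen i s) q"
          proof (intro allI impI)
            fix q assume q: "q \<le> k"
            show "\<not> pr x (gen i s) q"
            proof (cases "s k = i")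
              case False
              then have gk: "gen i s k = s k" using ge by simp
              show ?thesis
              proof
                assume "pr x (gen i s) q"
                then have "gen i s k \<in> {0,x}" using q unfolding pr_def by blast
                then show False using gk bad by simp
              qed
            next
              case True
              then have knz: "k \<noteq> 0" using \<open>\<not> (s k = i \<and> k = 0)\<close> by simp
              have ix: "i \<noteq> x" using True skx by simp
              show ?thesis
              proof (cases "q = k")
                case True
                have "gen i s k = 0" using ge \<open>s k = i\<close> by simp
                then show ?thesis using True knz x0 unfolding pr_def by auto
              next
                case False
                then have "k - 1 \<ge> q" "k - 1 < k" using q knz by auto
                moreover have "gen i s (k - 1) = i" using ge \<open>k - 1 < k\<close> by simp
                ultimately show ?thesis
                proof -
                  assume a: "k - 1 \<ge> q" "gen i s (k - 1) = i"
                  show ?thesis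
                  proof
                    assume "pr x (gen i s) q"
                    then have "gen i s (k - 1) \<in> {0,x}" using a(1) unfolding pr_def by blast
                    then show False using a(2) i0 ix by simp
                  qed
                qed
              qed
            qed
          qed
          show "\<exists>q. pr x s q" by (rule ex)
        qed
        then show ?thesis by simp
      qed
    qed
  qed
qed

lemma pr_ex:
  assumes t0L: "\<forall>m. t0 m \<in> {0,x}" and ne: "\<not> evconst t0" and cof: "\<forall>m\<ge>N. s m = t0 m"
  shows "\<exists>q. pr x s q"
proof -
  obtain q where q: "q \<ge> N" "t0 q \<noteq> 0" using nonzero_after[OF ne] by blast
  have "t0 q = x" using t0L q(2) by (metis insertE singletonD)
  then have "pr x s q" using cof q t0L unfolding pr_def by auto
  then show ?thesis by blast
qed

lemma pos_line:
  assumes x0: "x \<noteq> 0" and t0L: "\<forall>m. t0 m \<in> {0,x}" and sL: "\<forall>m. s m \<in> {0,x}"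
    and cof: "\<forall>m\<ge>N. s m = t0 m" and st: "s \<noteq> t0" and gt: "gen x s \<noteq> t0"
    and k1: "s k \<noteq> 0" and k2: "\<forall>m<k. s m = 0"
  shows "pos x t0 (gen x s) = pos x t0 s"
proof -
  have sk: "s k = x" using sL k1 by (metis insertE singletonD)
  have ge: "gen x s = (\<lambda>m. if m < k then x else if m = k then 0 else s m)"
    by (rule ext) (simp add: gen_explicit[OF k1 k2] sk)
  have gL: "\<forall>m. gen x s m \<in> {0,x}" using ge sL by auto
  have a1: "att x s = s" by (rule att_id[OF sL])
  have a2: "att x (gen x s) = gen x s" by (rule att_id[OF gL])
  obtain G where G: "topd s t0 G" using topd_exists[OF st cof] by blast
  have cof2: "\<forall>m\<ge>max N (Suc k). gen x s m = t0 m" using cof ge by auto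
  have p1: "pos x t0 s \<longleftrightarrow> s G = 0" using pos_iff[of x s t0 G] G a1 by simp
  show ?thesis
  proof (cases "G > k")
    case True
    have "topd (gen x s) t0 G" using G True ge unfolding topd_def by auto
    then have "pos x t0 (gen x s) \<longleftrightarrow> gen x s G = 0" using pos_iff[of x "gen x s" t0 G] a2 by simp
    then show ?thesis using p1 ge True by simp
  next
    case False
    show ?thesis
    proof (cases "G = k")
      case True
      have "t0 k \<noteq> x" using G True sk unfolding topd_def by simp
      then have t0k: "t0 k = 0" using t0L by (metis insertE singletonD)
      obtain G' where G': "topd (gen x s) t0 G'" using topd_exists[OF gt cof2] by blast
      have "G' < k"
      proof (rule ccontr)
        assume "\<not> G' < k"
        then have "G' \<ge> k" by simp
        moreover have "gen x s G' \<noteq> t0 G'" using G' unfolding topd_def by simp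
        ultimately show False using ge t0k G True unfolding topd_def by (cases "G' = k") auto
      qed
      then have "gen x s G' = x" using ge by simp
      then have "\<not> pos x t0 (gen x s)" using pos_iff[of x "gen x s" t0 G'] G' a2 x0 by simp
      moreover have "\<not> pos x t0 s" using p1 True sk x0 by simp
      ultimately show ?thesis by simp
    next
      case False2: False
      then have Gk: "G < k" using False by simp
      then have "s G = 0" using k2 by simp
      then have ps: "pos x t0 s" using p1 by simp
      have "t0 k = x" using G Gk sk unfolding topd_def by simp
      then have "topd (gen x s) t0 k" using ge G Gk x0 unfolding topd_def by auto
      then have "pos x t0 (gen x s)" using pos_iff[of x "gen x s" t0 k] a2 ge by simp
      then show ?thesis using ps by simp
    qed
  qed
qed

lemma pos_inv:
  assumes x0: "x \<noteq> 0" and t0L: "\<forall>m. t0 m \<in> {0,x}" and ne: "\<not> evconst t0"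
    and i0: "i \<noteq> 0" and cof: "\<forall>m\<ge>N. s m = t0 m" and st: "s \<noteq> t0" and gt: "gen i s \<noteq> t0"
  shows "pos x t0 (gen i s) = pos x t0 s"
proof -
  have "s \<noteq> (\<lambda>_. 0)"
  proof
    assume "s = (\<lambda>_. 0)"
    then have "\<forall>m\<ge>N. t0 m = 0" using cof by auto
    then show False using ne unfolding evconst_def by blast
  qed
  then have ex: "\<exists>m. s m \<noteq> 0" by auto
  define k where "k = (LEAST m. s m \<noteq> 0)"
  have k1: "s k \<noteq> 0" using LeastI_ex[OF ex] unfolding k_def .
  have k2: "\<forall>m<k. s m = 0"
  proof (intro allI impI)
    fix m assume "m < k"
    then show "s m = 0" using not_less_Least[of m "\<lambda>m. s m \<noteq> 0"] unfolding k_def by simp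
  qed
  have exq: "\<exists>q. pr x s q" by (rule pr_ex[OF t0L ne cof])
  note d = dich[OF x0 i0 exq k1 k2]
  show ?thesis
  proof (cases "att x (gen i s) = att x s")
    case True then show ?thesis unfolding pos_def by simp
  next
    case False
    then have "(\<forall>m. s m \<in> {0,x}) \<and> i = x" using d by simp
    then show ?thesis using pos_line[OF x0 t0L _ cof st _ k1 k2] gt by simp
  qed
qed

lemma infinite_vals:
  assumes "\<not> evconst t0" "\<forall>m. t0 m \<in> {0,x}" "c \<in> {0,x}"
  shows "infinite {m. t0 m = c}"
proof
  assume "finite {m. t0 m = c}"
  then obtain N where N: "\<forall>m\<in>{m. t0 m = c}. m < N" using finite_nat_bounded by blast
  have "\<forall>m\<ge>N. t0 m \<noteq> c" using N by auto
  then have "\<forall>m\<ge>N. t0 m = (if c = 0 then x else 0)" using assms(2,3) by (metis insertE singletonD)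
  then show False using assms(1) unfolding evconst_def by blast
qed

lemma lower_B_t0:
  assumes t0X: "t0 \<in> Xinf p" and x: "x \<in> {1..p}" and t0L: "\<forall>m. t0 m \<in> {0,x}" and ne: "\<not> evconst t0"
  shows "2 \<le> num_ends p t0"
proof -
  have x0: "x \<noteq> 0" using x by auto
  have oc: "orbit p t0 \<subseteq> Cofw p t0" by (rule orbit_cofw[OF t0X ne])
  define V where "V b = (if b then (\<lambda>m. t0(m := 0)) ` {m. t0 m = x} else (\<lambda>m. t0(m := x)) ` {m. t0 m = 0})" for b
  have P: "{t0} \<subseteq> orbit p t0" "finite {t0}" "{t0} \<noteq> {}" using orbit_refl by auto
  have "enat (card {True, False}) \<le> ecard (icomps p (orbit p t0 - {t0}))"
  proof (rule labels_lower[where lab = "pos x t0" and V = V, OF P])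
    show "finite {True, False}" by simp
  next
    fix a b assume ab: "(a,b) \<in> Restr (adj p) (orbit p t0 - {t0})"
    then have "(a,b) \<in> adj p" by simp
    then obtain i where i: "i \<in> {1..p}" "b = gen i a \<or> a = gen i b" unfolding adj_iff by blast
    have i0: "i \<noteq> 0" using i by auto
    have mem: "a \<in> Cofw p t0" "b \<in> Cofw p t0" "a \<noteq> t0" "b \<noteq> t0" using ab oc by auto
    obtain Na where Na: "\<forall>m\<ge>Na. a m = t0 m" using mem(1) by (auto simp: Cofw_def)
    obtain Nb where Nb: "\<forall>m\<ge>Nb. b m = t0 m" using mem(2) by (auto simp: Cofw_def)
    show "pos x t0 a = pos x t0 b"
    proof (cases "b = gen i a")
      case True then show ?thesis using pos_inv[OF x0 t0L ne i0 Na mem(3)] mem(4) by simp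
    next
      case False then have "a = gen i b" using i(2) by simp
      then show ?thesis using pos_inv[OF x0 t0L ne i0 Nb mem(4)] mem(3) by simp
    qed
  next
    fix l :: bool assume "l \<in> {True, False}"
    show "infinite (V l) \<and> V l \<subseteq> orbit p t0 - {t0} \<and> (\<forall>y\<in>V l. pos x t0 y = l)"
    proof (cases l)
      case True
      have inj: "inj_on (\<lambda>m. t0(m := 0)) {m. t0 m = x}"
      proof (rule inj_onI)
        fix a b assume ab: "a \<in> {m. t0 m = x}" "b \<in> {m. t0 m = x}" "t0(a := 0) = t0(b := 0)"
        show "a = b"
        proof (rule ccontr)
          assume "a \<noteq> b"
          then have "(t0(b := 0)) a = x" using ab(1) by simp
          moreover have "(t0(a := 0)) a = 0" by simp
          ultimately show False using ab(3) x0 by simp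
        qed
      qed
      have inf: "infinite (V l)" unfolding V_def using True infinite_vals[OF ne t0L, of x] inj
        by (simp add: finite_image_iff)
      have el: "y \<in> orbit p t0 - {t0} \<and> pos x t0 y" if y: "y \<in> V l" for y
      proof -
        obtain m where m: "t0 m = x" "y = t0(m := 0)" using y True unfolding V_def by auto
        have yX: "y \<in> piece p (Suc m) t0" using t0X m unfolding piece_def Xinf_def by auto
        have yo: "y \<in> orbit p t0" using yX piece_orbit[OF t0X] by auto
        have yt: "y \<noteq> t0" using m x0 by (metis fun_upd_same)
        have yL: "\<forall>m. y m \<in> {0,x}" using m t0L by auto
        have ay: "att x y = y" by (rule att_id[OF yL])
        have "topd y t0 m" using m x0 unfolding topd_def by auto
        then have "topd (att x y) t0 m" using ay by simp
        then have "pos x t0 y \<longleftrightarrow> att x y m = 0" by (rule pos_iff)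
        moreover have "att x y m = 0" using ay m by simp
        ultimately have "pos x t0 y" by simp
        then show ?thesis using yo yt by simp
      qed
      show ?thesis using inf el True by auto
    next
      case False
      have inj: "inj_on (\<lambda>m. t0(m := x)) {m. t0 m = 0}"
      proof (rule inj_onI)
        fix a b assume ab: "a \<in> {m. t0 m = 0}" "b \<in> {m. t0 m = 0}" "t0(a := x) = t0(b := x)"
        show "a = b"
        proof (rule ccontr)
          assume "a \<noteq> b"
          then have "(t0(b := x)) a = 0" using ab(1) by simp
          moreover have "(t0(a := x)) a = x" by simp
          ultimately show False using ab(3) x0 by simp
        qed
      qed
      have inf: "infinite (V l)" unfolding V_def using False infinite_vals[OF ne t0L, of 0] inj
        by (simp add: finite_image_iff)
      have el: "y \<in> orbit p t0 - {t0} \<and> \<not> pos x t0 y" if y: "y \<in> V l" for y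
      proof -
        obtain m where m: "t0 m = 0" "y = t0(m := x)" using y False unfolding V_def by auto
        have yX: "y \<in> piece p (Suc m) t0" using t0X m x unfolding piece_def Xinf_def by auto
        have yo: "y \<in> orbit p t0" using yX piece_orbit[OF t0X] by auto
        have yt: "y \<noteq> t0" using m x0 by (metis fun_upd_same)
        have yL: "\<forall>m. y m \<in> {0,x}" using m t0L by auto
        have ay: "att x y = y" by (rule att_id[OF yL])
        have "topd y t0 m" using m x0 unfolding topd_def by auto
        then have "topd (att x y) t0 m" using ay by simp
        then have "pos x t0 y \<longleftrightarrow> att x y m = 0" by (rule pos_iff)
        moreover have "att x y m = x" using ay m by simp
        ultimately have "\<not> pos x t0 y" using x0 by simp
        then show ?thesis using yo yt by simp
      qed
      show ?thesis using inf el False by auto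
    qed
  qed
  moreover have "enat (card {True, False}) = 2" by (simp add: numeral_eq_enat)
  ultimately have "2 \<le> ecard (icomps p (orbit p t0 - {t0}))" by simp
  then show ?thesis using num_ends_ge[of "{t0}" p t0 2] P by simp
qed

lemma ends_B:
  assumes v: "v \<in> Xinf p" and B: "clsB p v"
  shows "num_ends p v = 2"
proof -
  have ne: "\<not> evconst v" using B by (simp add: clsB_def)
  obtain x N where x: "x \<in> {1..p}" "\<forall>m\<ge>N. v m \<in> {0,x}" using B by (auto simp: clsB_def evpair_def)
  define t0 where "t0 m = (if m = 0 then x else if m \<le> N then 0 else v m)" for m
  have t0X: "t0 \<in> Xinf p" using v x unfolding t0_def Xinf_def by auto
  have t0L: "\<forall>m. t0 m \<in> {0,x}" using x unfolding t0_def by auto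
  have ag: "\<forall>m>N. t0 m = v m" unfolding t0_def by auto
  have ne0: "\<not> evconst t0" using evconst_shift_agree[OF ag] ne by simp
  have "t0 \<in> piece p (Suc N) v" using t0X ag unfolding piece_def by auto
  then have "t0 \<in> orbit p v" using piece_orbit[OF v] by auto
  then have oe: "orbit p t0 = orbit p v" by (rule orbit_eq)
  have "num_ends p t0 = num_ends p v" unfolding num_ends_def oe ..
  moreover have "2 \<le> num_ends p t0" by (rule lower_B_t0[OF t0X x(1) t0L ne0])
  ultimately have "2 \<le> num_ends p v" by simp
  then show ?thesis using upper_B[OF v B] by simp
qed

definition cyl :: "nat set \<Rightarrow> nat set \<Rightarrow> word set" where
  "cyl J A = {w. \<forall>m\<in>J. w m \<in> A}"

lemma nu_prob: "prob_space (nu p)"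
  unfolding nu_def by (intro prob_space_PiM measure_pmf.prob_space_axioms)

lemma nu_space: "space (nu p) = UNIV"
  unfolding nu_def by (simp add: space_PiM)

lemma cyl_emb: "cyl J A = prod_emb UNIV (\<lambda>_. measure_pmf (pmf_of_set {0..p})) J (PiE J (\<lambda>_. A))"
  unfolding cyl_def prod_emb_def by (auto simp: space_PiM PiE_iff)

lemma cyl_sets: "finite J \<Longrightarrow> cyl J A \<in> sets (nu p)"
  unfolding cyl_emb[of J A p] nu_def by (rule sets_PiM_I) auto

lemma cyl_emeasure:
  assumes "finite J"
  shows "emeasure (nu p) (cyl J A) = ennreal (real (card ({0..p} \<inter> A)) / real (Suc p)) ^ card J"
proof -
  have "emeasure (nu p) (cyl J A) = (\<Prod>m\<in>J. emeasure (measure_pmf (pmf_of_set {0..p})) A)"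
    unfolding cyl_emb[of J A p] nu_def
    by (rule emeasure_PiM_emb) (auto simp: assms measure_pmf.prob_space_axioms)
  also have "\<dots> = (\<Prod>m\<in>J. ennreal (real (card ({0..p} \<inter> A)) / real (Suc p)))"
  proof (rule prod.cong[OF refl])
    fix m
    show "emeasure (measure_pmf (pmf_of_set {0..p})) A = ennreal (real (card ({0..p} \<inter> A)) / real (Suc p))"
      using emeasure_pmf_of_set[of "{0..p}" A] by (simp add: ennreal_of_nat_eq_real_of_nat divide_ennreal)
  qed
  also have "\<dots> = ennreal (real (card ({0..p} \<inter> A)) / real (Suc p)) ^ card J" by simp
  finally show ?thesis .
qed

definition Dset :: "nat \<Rightarrow> nat \<Rightarrow> word set" where
  "Dset i N = {w. \<forall>m\<ge>N. w m \<in> {0,i}}"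

lemma Dset_sets: "Dset i N \<in> sets (nu p)"
proof -
  have "Dset i N = (\<Inter>k. cyl {N+k} {0,i})"
  proof (intro set_eqI iffI)
    fix w assume "w \<in> Dset i N"
    then show "w \<in> (\<Inter>k. cyl {N+k} {0,i})" unfolding Dset_def cyl_def by simp
  next
    fix w assume a: "w \<in> (\<Inter>k. cyl {N+k} {0,i})"
    show "w \<in> Dset i N" unfolding Dset_def
    proof (intro CollectI allI impI)
      fix m assume "N \<le> m"
      then have "m = N + (m - N)" by simp
      moreover have "w (N + (m - N)) \<in> {0,i}" using a unfolding cyl_def by blast
      ultimately show "w m \<in> {0,i}" by metis
    qed
  qed
  also have "\<dots> \<in> sets (nu p)" by (rule sets.countable_INT) (auto intro!: cyl_sets)
  finally show ?thesis .
qed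

lemma Dset_null:
  assumes p: "p \<ge> 2" and i: "i \<in> {1..p}"
  shows "Dset i N \<in> null_sets (nu p)"
proof -
  define r :: real where "r = 2 / real (Suc p)"
  have r: "0 \<le> r" "r < 1" using p unfolding r_def by auto
  have c2: "card ({0..p} \<inter> {0,i}) = 2" using i by auto
  have bound: "emeasure (nu p) (Dset i N) \<le> ennreal (r ^ K)" for K
  proof -
    have "Dset i N \<subseteq> cyl {N..<N+K} {0,i}" unfolding Dset_def cyl_def by auto
    then have "emeasure (nu p) (Dset i N) \<le> emeasure (nu p) (cyl {N..<N+K} {0,i})"
      by (intro emeasure_mono cyl_sets) auto
    also have "\<dots> = ennreal r ^ K" using cyl_emeasure[of "{N..<N+K}" p "{0,i}"] c2 unfolding r_def by simp
    finally show ?thesis by (simp add: ennreal_power r)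
  qed
  have lim: "(\<lambda>K. ennreal (r ^ K)) \<longlonglongrightarrow> ennreal 0"
    by (rule tendsto_ennrealI, rule LIMSEQ_power_zero) (use r in auto)
  have "emeasure (nu p) (Dset i N) \<le> ennreal 0"
    by (rule LIMSEQ_le_const[OF lim]) (use bound in auto)
  then have "emeasure (nu p) (Dset i N) = 0" by simp
  then show ?thesis using Dset_sets by auto
qed

lemma Xinf_measure: "emeasure (nu p) (Xinf p) = 1"
proof -
  define Nul where "Nul = (\<Union>n. cyl {n} (- {0..p}))"
  have "cyl {n} (- {0..p}) \<in> null_sets (nu p)" for n
  proof -
    have "emeasure (nu p) (cyl {n} (- {0..p})) = 0" using cyl_emeasure[of "{n}" p "- {0..p}"] by simp
    then show ?thesis using cyl_sets[of "{n}"] by auto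
  qed
  then have N: "Nul \<in> null_sets (nu p)" unfolding Nul_def by auto
  have X: "Xinf p = space (nu p) - Nul" unfolding Nul_def Xinf_def cyl_def nu_space by auto
  have "emeasure (nu p) (Xinf p) = emeasure (nu p) (space (nu p))"
    unfolding X by (rule emeasure_Diff_null_set[OF N]) simp
  also have "\<dots> = 1" using prob_space.emeasure_space_1[OF nu_prob] .
  finally show ?thesis .
qed

lemma measure_main:
  assumes p: "p \<ge> 2"
  shows "emeasure (nu p) (Xinf p - (\<Union>i\<in>{1..p}. \<Union>N. Dset i N)) = 1"
proof -
  have N: "(\<Union>i\<in>{1..p}. \<Union>N. Dset i N) \<in> null_sets (nu p)"
    by (rule null_sets_UN') (use Dset_null[OF p] in auto)
  have Xs: "Xinf p \<in> sets (nu p)"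
  proof -
    have "Xinf p = (\<Inter>n. cyl {n} {0..p})" unfolding Xinf_def cyl_def by auto
    also have "\<dots> \<in> sets (nu p)" by (rule sets.countable_INT) (auto intro!: cyl_sets)
    finally show ?thesis .
  qed
  show ?thesis using emeasure_Diff_null_set[OF N Xs] Xinf_measure by simp
qed

lemma ends_val:
  assumes p: "p \<ge> 2" and v: "v \<in> Xinf p"
  shows "num_ends p v = (if evconst v then enat (2*p) else if clsB p v then enat 2 else enat 1)"
proof (cases "evconst v")
  case True
  then have "v \<in> Aset p" using v by (simp add: Aset_def)
  then show ?thesis using ends_A True by simp
next
  case False
  show ?thesis
  proof (cases "clsB p v")
    case True then show ?thesis using ends_B[OF v True] False by (simp add: numeral_eq_enat)
  next
    case False2: False
    have C: "clsC p v" using False False2 by (simp add: clsB_def clsC_def)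
    have p1: "p \<ge> 1" using p by simp
    show ?thesis using ends_C[OF v p1 C] False False2 by (simp add: one_enat_def)
  qed
qed

lemma kend: "k_ended p k v \<longleftrightarrow> num_ends p v = enat k" by (simp add: k_ended_def)

lemma val_cases:
  assumes p: "p \<ge> 2" and v: "v \<in> Xinf p"
  shows "(num_ends p v = enat (2*p) \<longleftrightarrow> evconst v) \<and> (num_ends p v = enat 2 \<longleftrightarrow> clsB p v)
         \<and> (num_ends p v = enat 1 \<longleftrightarrow> clsC p v)"
proof (cases "evconst v")
  case True
  have "2*p \<noteq> 2" "2*p \<noteq> 1" using p by auto
  then show ?thesis using ends_val[OF p v] True by (simp add: clsB_def clsC_def)
next
  case False
  show ?thesis
  proof (cases "clsB p v")
    case True
    have "2*p \<noteq> 2" using p by auto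
    then show ?thesis using ends_val[OF p v] True False by (auto simp: clsB_def clsC_def)
  next
    case False2: False
    have "2*p \<noteq> 1" using p by auto
    then show ?thesis using ends_val[OF p v] False2 False by (auto simp: clsB_def clsC_def)
  qed
qed

lemma E_2p: "p \<ge> 2 \<Longrightarrow> E p (2*p) = Aset p"
  unfolding E_def kend Aset_def using val_cases by blast

lemma E_2: "p \<ge> 2 \<Longrightarrow> E p 2 = {w \<in> Xinf p. clsB p w}"
  unfolding E_def kend using val_cases by blast

lemma E_1: "p \<ge> 2 \<Longrightarrow> E p 1 = {w \<in> Xinf p. clsC p w}"
  unfolding E_def kend using val_cases by blast

lemma fin_iff:
  fixes a b :: word
  shows "finite {n. a n \<noteq> b n} \<longleftrightarrow> (\<exists>N. \<forall>m\<ge>N. a m = b m)"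
proof
  assume fin: "finite {n. a n \<noteq> b n}"
  have "\<exists>N. {n. a n \<noteq> b n} \<subseteq> {..<N}" by (rule finite_nat_bounded[OF fin])
  then obtain N where N: "{n. a n \<noteq> b n} \<subseteq> {..<N}" by (elim exE)
  have "\<forall>m\<ge>N. a m = b m"
  proof (intro allI impI)
    fix m assume m: "N \<le> m"
    show "a m = b m"
    proof (rule ccontr)
      assume "a m \<noteq> b m"
      then have "m \<in> {..<N}" using N by blast
      then show False using m by simp
    qed
  qed
  then show "\<exists>N. \<forall>m\<ge>N. a m = b m" by blast
next
  assume "\<exists>N. \<forall>m\<ge>N. a m = b m"
  then obtain N where N: "\<forall>m\<ge>N. a m = b m" by blast
  have "{n. a n \<noteq> b n} \<subseteq> {..<N}"
  proof
    fix n assume "n \<in> {n. a n \<noteq> b n}"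
    then have "a n \<noteq> b n" by simp
    then have "\<not> N \<le> n" using N by metis
    then show "n \<in> {..<N}" by simp
  qed
  then show "finite {n. a n \<noteq> b n}" using finite_subset by blast
qed

lemma Cof_const: "(\<Union>j\<in>{0..p}. Cof p (\<lambda>_. j)) = Aset p"
proof
  show "(\<Union>j\<in>{0..p}. Cof p (\<lambda>_. j)) \<subseteq> Aset p"
    unfolding Cof_def Aset_def evconst_def fin_iff by blast
  show "Aset p \<subseteq> (\<Union>j\<in>{0..p}. Cof p (\<lambda>_. j))"
  proof
    fix y assume y: "y \<in> Aset p"
    then obtain j N where jN: "\<forall>m\<ge>N. y m = j" unfolding Aset_def evconst_def by blast
    have "y N = j" using jN by simp
    then have "j \<le> p" using y by (auto simp: Aset_def Xinf_def)
    moreover have "y \<in> Cof p (\<lambda>_. j)" using y jN unfolding Cof_def fin_iff Aset_def by auto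
    ultimately show "y \<in> (\<Union>j\<in>{0..p}. Cof p (\<lambda>_. j))" by auto
  qed
qed

lemma Cof_pairs: "(\<Union>i\<in>{1..p}. \<Union>w\<in>{w. \<forall>n. w n \<in> {0, i}}. Cof p w) = {y \<in> Xinf p. \<exists>i\<in>{1..p}. evpair i y}"
proof
  show "(\<Union>i\<in>{1..p}. \<Union>w\<in>{w. \<forall>n. w n \<in> {0, i}}. Cof p w) \<subseteq> {y \<in> Xinf p. \<exists>i\<in>{1..p}. evpair i y}"
  proof
    fix y assume "y \<in> (\<Union>i\<in>{1..p}. \<Union>w\<in>{w. \<forall>n. w n \<in> {0, i}}. Cof p w)"
    then obtain i w where iw: "i \<in> {1..p}" "\<forall>n. w n \<in> {0,i}" "y \<in> Cof p w" by blast
    then obtain N where N: "\<forall>m\<ge>N. y m = w m" "y \<in> Xinf p" unfolding Cof_def fin_iff by blast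
    have "evpair i y" unfolding evpair_def using N(1) iw(2) by metis
    then show "y \<in> {y \<in> Xinf p. \<exists>i\<in>{1..p}. evpair i y}" using N(2) iw(1) by blast
  qed
  show "{y \<in> Xinf p. \<exists>i\<in>{1..p}. evpair i y} \<subseteq> (\<Union>i\<in>{1..p}. \<Union>w\<in>{w. \<forall>n. w n \<in> {0, i}}. Cof p w)"
  proof
    fix y assume "y \<in> {y \<in> Xinf p. \<exists>i\<in>{1..p}. evpair i y}"
    then obtain i N where iN: "y \<in> Xinf p" "i \<in> {1..p}" "\<forall>m\<ge>N. y m \<in> {0,i}" unfolding evpair_def by blast
    define w where "w n = (if y n \<in> {0,i} then y n else 0)" for n
    have w1: "\<forall>n. w n \<in> {0,i}" unfolding w_def by auto
    have "\<forall>m\<ge>N. y m = w m" using iN(3) unfolding w_def by auto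
    then have "y \<in> Cof p w" using iN(1) unfolding Cof_def fin_iff by blast
    then show "y \<in> (\<Union>i\<in>{1..p}. \<Union>w\<in>{w. \<forall>n. w n \<in> {0, i}}. Cof p w)" using w1 iN(2) by blast
  qed
qed

lemma piece_countable: "countable (piece p n v)" using piece_finite by (rule countable_finite)

lemma Aset_countable: "countable (Aset p)"
proof -
  have "Aset p \<subseteq> (\<Union>N. \<Union>j\<in>{0..p}. piece p N (\<lambda>_. j))"
  proof
    fix y assume y: "y \<in> Aset p"
    then obtain j N where jN: "\<forall>m\<ge>N. y m = j" unfolding Aset_def evconst_def by blast
    have "y N = j" using jN by simp
    then have jp: "j \<le> p" using y by (auto simp: Aset_def Xinf_def)
    have yP: "y \<in> piece p N (\<lambda>_. j)" using y jN by (auto simp: piece_def Aset_def)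
    have y1: "y \<in> (\<Union>j\<in>{0..p}. piece p N (\<lambda>_. j))" by (rule UN_I[of j]) (use jp yP in auto)
    have y2: "y \<in> (\<lambda>N. \<Union>j\<in>{0..p}. piece p N (\<lambda>_. j)) N" using y1 by simp
    show "y \<in> (\<Union>N. \<Union>j\<in>{0..p}. piece p N (\<lambda>_. j))" using UnionI[OF rangeI[of "\<lambda>N. \<Union>j\<in>{0..p}. piece p N (\<lambda>_. j)" N] y2] by simp
  qed
  moreover have "countable (\<Union>N. \<Union>j\<in>{0..p}. piece p N (\<lambda>_. j))"
    by (intro countable_UN piece_countable) auto
  ultimately show ?thesis using countable_subset by blast
qed

lemma orbit_countable:
  assumes v: "v \<in> Xinf p"
  shows "countable (orbit p v)"
proof (cases "evconst v")
  case True
  then have "orbit p v = Aset p" using orbit_A' v by (simp add: Aset_def)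
  then show ?thesis using Aset_countable by simp
next
  case False
  have "orbit p v \<subseteq> (\<Union>N. piece p N v)"
  proof
    fix y assume "y \<in> orbit p v"
    then have "y \<in> Cofw p v" using orbit_cofw[OF v False] by auto
    then show "y \<in> (\<Union>N. piece p N v)" unfolding Cofw_def piece_def by auto
  qed
  moreover have "countable (\<Union>N. piece p N v)" by (intro countable_UN piece_countable) auto
  ultimately show ?thesis using countable_subset by blast
qed

lemma uncountable_orbits:
  assumes S: "S \<subseteq> Xinf p" "uncountable S"
  shows "uncountable {orbit p w | w. w \<in> S}"
proof
  assume c: "countable {orbit p w | w. w \<in> S}"
  have "\<forall>a\<in>{orbit p w | w. w \<in> S}. countable a" using orbit_countable S(1) by auto
  then have "countable (\<Union>a\<in>{orbit p w | w. w \<in> S}. a)" using c by (intro countable_UN) auto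
  moreover have "S \<subseteq> (\<Union>a\<in>{orbit p w | w. w \<in> S}. a)" using orbit_refl by blast
  ultimately show False using S(2) countable_subset by blast
qed

lemma unc_bool: "uncountable (UNIV :: (nat \<Rightarrow> bool) set)"
  unfolding uncountable_def
proof (intro conjI notI)
  show "(UNIV :: (nat \<Rightarrow> bool) set) = {} \<Longrightarrow> False" by simp
next
  assume "\<exists>f::nat \<Rightarrow> (nat \<Rightarrow> bool). range f = UNIV"
  then obtain f :: "nat \<Rightarrow> (nat \<Rightarrow> bool)" where f: "range f = UNIV" by blast
  define d where "d n = (\<not> f n n)" for n
  have "d \<in> range f" using f by simp
  then obtain n where "d = f n" by blast
  then have "d n = f n n" by simp
  then show False unfolding d_def by simp
qed

lemma unc_image: "inj g \<Longrightarrow> uncountable (range (g :: (nat \<Rightarrow> bool) \<Rightarrow> 'a))"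
  using countable_image_inj_on[of g UNIV] unc_bool by auto

lemma B_uncountable:
  assumes p: "p \<ge> 2"
  shows "uncountable {w \<in> Xinf p. clsB p w}"
proof -
  define g where "g b = (\<lambda>n. if b n then 1 else (0::nat))" for b :: "nat \<Rightarrow> bool"
  have inj: "inj g"
  proof (rule injI)
    fix a b assume "g a = g b"
    then have "\<forall>n. a n = b n" unfolding g_def by (metis one_neq_zero)
    then show "a = b" by auto
  qed
  have "range g - Aset p \<subseteq> {w \<in> Xinf p. clsB p w}"
  proof
    fix y assume y: "y \<in> range g - Aset p"
    then obtain b where b: "y = g b" by auto
    have yX: "y \<in> Xinf p" using p b unfolding g_def Xinf_def by auto
    have "evpair 1 y" unfolding evpair_def b g_def by auto
    moreover have "\<not> evconst y" using y yX by (auto simp: Aset_def)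
    ultimately show "y \<in> {w \<in> Xinf p. clsB p w}" using yX p by (auto simp: clsB_def)
  qed
  moreover have "uncountable (range g - Aset p)"
    by (rule uncountable_minus_countable[OF unc_image[OF inj] Aset_countable])
  ultimately show ?thesis using countable_subset by blast
qed

lemma C_uncountable:
  assumes p: "p \<ge> 2"
  shows "uncountable {w \<in> Xinf p. clsC p w}"
proof -
  define h where "h b = (\<lambda>n. if n mod 3 = 0 then 1 else if n mod 3 = 1 then 2 else if b (n div 3) then 1 else (0::nat))"
    for b :: "nat \<Rightarrow> bool"
  have inj: "inj h"
  proof (rule injI)
    fix a b assume e: "h a = h b"
    have "a k = b k" for k
    proof -
      have "h a (3*k+2) = h b (3*k+2)" using e by simp
      moreover have m: "(3*k+2) mod 3 = 2" "(3*k+2) div 3 = k" by presburger+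
      moreover have "h c (3*k+2) = (if c k then 1 else 0)" for c unfolding h_def using m by simp
      ultimately have "(if a k then 1 else 0::nat) = (if b k then 1 else 0)" by simp
      then show ?thesis by (cases "a k"; cases "b k") auto
    qed
    then show "a = b" by auto
  qed
  have "range h \<subseteq> {w \<in> Xinf p. clsC p w}"
  proof
    fix y assume "y \<in> range h"
    then obtain b where b: "y = h b" by auto
    have v0: "y (3*N) = 1" for N unfolding b h_def by simp
    have v1: "y (3*N+1) = 2" for N unfolding b h_def by simp
    have yX: "y \<in> Xinf p" using p unfolding b h_def Xinf_def by auto
    have ne: "\<not> evconst y"
    proof
      assume "evconst y"
      then obtain j N where "\<forall>m\<ge>N. y m = j" unfolding evconst_def by blast
      then have "y (3*N) = j" "y (3*N+1) = j" by auto
      then show False using v0 v1 by simp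
    qed
    have np: "\<not> evpair i y" if i: "i \<in> {1..p}" for i
    proof
      assume "evpair i y"
      then obtain N where N: "\<forall>m\<ge>N. y m \<in> {0,i}" unfolding evpair_def by blast
      have "y (3*N) \<in> {0,i}" "y (3*N+1) \<in> {0,i}" using N by auto
      then show False using v0 v1 by auto
    qed
    show "y \<in> {w \<in> Xinf p. clsC p w}" using yX ne np by (auto simp: clsC_def)
  qed
  then show ?thesis using unc_image[OF inj] countable_subset by blast
qed

lemma E1_Dset:
  assumes p: "p \<ge> 2"
  shows "E p 1 = Xinf p - (\<Union>i\<in>{1..p}. \<Union>N. Dset i N)"
proof -
  have "y \<in> Xinf p \<Longrightarrow> clsC p y \<longleftrightarrow> y \<notin> (\<Union>i\<in>{1..p}. \<Union>N. Dset i N)" for y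
  proof -
    assume yX: "y \<in> Xinf p"
    have ep: "evpair i y \<longleftrightarrow> (\<exists>N. y \<in> Dset i N)" for i unfolding evpair_def Dset_def by simp
    have "evconst y \<Longrightarrow> \<exists>i\<in>{1..p}. evpair i y"
    proof -
      assume "evconst y"
      then obtain j N where jN: "\<forall>m\<ge>N. y m = j" unfolding evconst_def by blast
      have "y N = j" using jN by simp
      then have jp: "j \<le> p" using yX by (auto simp: Xinf_def)
      show ?thesis
      proof (cases "j = 0")
        case True
        then have "evpair 1 y" unfolding evpair_def using jN by auto
        then show ?thesis using p by auto
      next
        case False
        then have "evpair j y" unfolding evpair_def using jN by auto
        then show ?thesis using jp False by auto
      qed
    qed
    then show ?thesis unfolding clsC_def using ep by auto
  qed
  then show ?thesis unfolding E_1[OF p] by auto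
qed

theorem theorem4p16:
  fixes p :: nat
  assumes "p \<ge> 2"
  shows "(\<forall>v \<in> Xinf p. k_ended p (2*p) v \<or> k_ended p 2 v \<or> k_ended p 1 v)
    \<and> E p (2*p) = (\<Union>j\<in>{0..p}. Cof p (\<lambda>_. j))
    \<and> (\<exists>v \<in> Xinf p. E p (2*p) = orbit p v)
    \<and> E p 2 = (\<Union>i\<in>{1..p}. \<Union>w\<in>{w. \<forall>n. w n \<in> {0, i}}. Cof p w) - E p (2*p)
    \<and> uncountable {orbit p w | w. w \<in> E p 2}
    \<and> E p 1 = Xinf p - (E p (2*p) \<union> E p 2)
    \<and> uncountable {orbit p w | w. w \<in> E p 1}
    \<and> emeasure (nu p) (E p 1) = 1"
proof -
  note p = assms
  have e2p: "E p (2*p) = Aset p" by (rule E_2p[OF p])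
  have e2: "E p 2 = {w \<in> Xinf p. clsB p w}" by (rule E_2[OF p])
  have e1: "E p 1 = {w \<in> Xinf p. clsC p w}" by (rule E_1[OF p])
  have c1: "\<forall>v \<in> Xinf p. k_ended p (2*p) v \<or> k_ended p 2 v \<or> k_ended p 1 v"
  proof
    fix v assume v: "v \<in> Xinf p"
    have "evconst v \<or> clsB p v \<or> clsC p v" by (auto simp: clsB_def clsC_def)
    then show "k_ended p (2*p) v \<or> k_ended p 2 v \<or> k_ended p 1 v"
      using val_cases[OF p v] unfolding kend by auto
  qed
  have c2: "E p (2*p) = (\<Union>j\<in>{0..p}. Cof p (\<lambda>_. j))" using e2p Cof_const by simp
  have c3: "\<exists>v \<in> Xinf p. E p (2*p) = orbit p v"
    using e2p orbit_A[of p] by (intro bexI[of _ "\<lambda>_. 0"]) (auto simp: Xinf_def)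
  have c4: "E p 2 = (\<Union>i\<in>{1..p}. \<Union>w\<in>{w. \<forall>n. w n \<in> {0, i}}. Cof p w) - E p (2*p)"
    unfolding Cof_pairs e2p e2 by (auto simp: Aset_def clsB_def)
  have c5: "uncountable {orbit p w | w. w \<in> E p 2}"
    by (rule uncountable_orbits) (use e2 B_uncountable[OF p] in auto)
  have c6: "E p 1 = Xinf p - (E p (2*p) \<union> E p 2)"
    unfolding e1 e2p e2 by (auto simp: Aset_def clsB_def clsC_def)
  have c7: "uncountable {orbit p w | w. w \<in> E p 1}"
    by (rule uncountable_orbits) (use e1 C_uncountable[OF p] in auto)
  have c8: "emeasure (nu p) (E p 1) = 1" unfolding E1_Dset[OF p] by (rule measure_main[OF p])
  show ?thesis using c1 c2 c3 c4 c5 c6 c7 c8 by blast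
qed

end
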